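(* Let $\theta$ be supertransversal and cancellation-free, and let $\tau$ be a ridge (face of dimension $n_0-2$) of the breakpoint complex $\mathcal B_\theta$. Then the number of facets of $\mathcal B_\theta$ containing $\tau$ is either $3$ or $4$.
   Context: Networks: $\theta=(W^{(\ell)},b^{(\ell)})_{\ell\in[L+1]}$, $a^{(0)}=x$, $z^{(\ell)}=W^{(\ell)}a^{(\ell-1)}+b^{(\ell)}$, $a^{(\ell)}=\max(0,z^{(\ell)})$, $f_\theta=W^{(L+1)}a^{(L)}+b^{(L+1)}$ on $\mathbb R^{n_0}$. Canonical complex: $\mathcal C_{\theta,0}=\{\mathbb R^{n_0}\}$; for $R\in\mathcal C_{\theta,\ell-1}$, $H_R(\ell,j)=\{x\in\operatorname{aff}(R):z^{(\ell)}_j|_R(x)=0\}$, half-spaces $H^\pm_R(\ell,j)$, $H^0_R=H_R$; $\mathcal C_{\theta,\ell}=\{R\cap\bigcap_jH^{s_j}_R(\ell,j)\}$; $\mathcal C_\theta=\mathcal C_{\theta,L}$. Bent hyperplane $B_{j,\ell}(\theta)=\bigcup\{\{x\in R:z^{(\ell)}_j|_R(x)=0\}:R\in\mathcal C_{\theta,\ell-1},z^{(\ell)}_j|_R\text{ non-constant}\}$. A breakpoint of $f_\theta$ is a point with no open neighborhood on which $f_\theta$ is affine. The breakpoint complex is $\mathcal B_\theta=\{P\in\mathcal C_\theta: P\subseteq\text{set of breakpoints of }f_\theta\}$. Tropical weight of a facet $\sigma=P\cap Q$ of $\mathcal C_\theta$: $c_\theta(\sigma)=(A_P-A_Q)e_{P/\sigma}$,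 where $A_P,A_Q$ are the linear parts of $f_\theta$ on $P,Q$ and $e_{P/\sigma}$ is the unit normal of $\sigma$ pointing into $P$. $\theta$ is supertransversal if each codimension-$k$ face of $\mathcal C_\theta$ lies in exactly $k$ bent hyperplanes; cancellation-free if for every facet $\sigma$ of $\mathcal C_\theta$, $c_\theta(\sigma)=0$ iff some hidden layer $k$ has all its preactivations negative on $\operatorname{relint}(\sigma)$. *)

theory Defs
  imports "HOL-Analysis.Analysis"
begin

text \<open>A fully connected ReLU network with input space real^'n (so n_0 = CARD('n)).
  depth = L (number of hidden layers); width l = n_l for l = 1..L+1;
  W1 j = j-th row of the first weight matrix W^(1);
  Wt l j i = entry (j,i) of W^(l) for l >= 2; bias l j = b^(l)_j.\<close>
record ('n::finite) relu_net =
  depth :: nat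
  width :: "nat \<Rightarrow> nat"
  W1 :: "nat \<Rightarrow> real^'n"
  Wt :: "nat \<Rightarrow> nat \<Rightarrow> nat \<Rightarrow> real"
  bias :: "nat \<Rightarrow> nat \<Rightarrow> real"

definition valid_net :: "('n::finite) relu_net \<Rightarrow> bool" where
  "valid_net N \<longleftrightarrow> (\<forall>l\<in>{1..Suc (depth N)}. 0 < width N l)"

text \<open>Preactivation z^(l)_j(x) for l >= 1; layer depth+1 is the output layer.\<close>
fun pre :: "('n::finite) relu_net \<Rightarrow> nat \<Rightarrow> nat \<Rightarrow> real^'n \<Rightarrow> real" where
  "pre N 0 j x = 0"
| "pre N (Suc 0) j x = W1 N j \<bullet> x + bias N 1 j"
| "pre N (Suc (Suc l)) j x =
     (\<Sum>i<width N (Suc l). Wt N (Suc (Suc l)) j i * max 0 (pre N (Suc l) i x))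
     + bias N (Suc (Suc l)) j"

definition netf :: "('n::finite) relu_net \<Rightarrow> real^'n \<Rightarrow> nat \<Rightarrow> real" where
  "netf N x k = pre N (Suc (depth N)) k x"

definition nout :: "('n::finite) relu_net \<Rightarrow> nat" where
  "nout N = width N (Suc (depth N))"

definition sgn_cond :: "int \<Rightarrow> real \<Rightarrow> bool" where
  "sgn_cond s t = (if 0 < s then 0 \<le> t else if s < 0 then t \<le> 0 else t = 0)"

text \<open>C_{theta,l}. Since R \<subseteq> aff R and the affine extension agrees with z on R,
  R \<inter> H^s_R(l,j) = {x \<in> R. z^(l)_j(x) satisfies the sign condition}.\<close>
fun cells :: "('n::finite) relu_net \<Rightarrow> nat \<Rightarrow> (real^'n) set set" where
  "cells N 0 = {UNIV}"
| "cells N (Suc l) = {P. P \<noteq> {} \<and> (\<exists>R\<in>cells N l. \<exists>s::nat \<Rightarrow> int.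
        P = {x\<in>R. \<forall>j<width N (Suc l). sgn_cond (s j) (pre N (Suc l) j x)})}"

definition canonical :: "('n::finite) relu_net \<Rightarrow> (real^'n) set set" where
  "canonical N = cells N (depth N)"

definition bent :: "('n::finite) relu_net \<Rightarrow> nat \<Rightarrow> nat \<Rightarrow> (real^'n) set" where
  "bent N l j = \<Union>{{x\<in>R. pre N l j x = 0} | R. R \<in> cells N (l - 1) \<and>
        (\<exists>x\<in>R. \<exists>y\<in>R. pre N l j x \<noteq> pre N l j y)}"

definition affine_on_net :: "('n::finite) relu_net \<Rightarrow> (real^'n) set \<Rightarrow> bool" where
  "affine_on_net N U \<longleftrightarrow> (\<exists>(A::nat \<Rightarrow> real^'n) (c::nat \<Rightarrow> real).
      \<forall>x\<in>U. \<forall>k<nout N. netf N x k = A k \<bullet> x + c k)"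

definition breakpoint :: "('n::finite) relu_net \<Rightarrow> real^'n \<Rightarrow> bool" where
  "breakpoint N x \<longleftrightarrow> \<not> (\<exists>U. open U \<and> x \<in> U \<and> affine_on_net N U)"

definition breakpoint_complex :: "('n::finite) relu_net \<Rightarrow> (real^'n) set set" where
  "breakpoint_complex N = {P\<in>canonical N. P \<subseteq> {x. breakpoint N x}}"

definition supertransversal :: "('n::finite) relu_net \<Rightarrow> bool" where
  "supertransversal N \<longleftrightarrow> (\<forall>F\<in>canonical N.
     card {(l, j). l \<in> {1..depth N} \<and> j < width N l \<and> F \<subseteq> bent N l j}
       = nat (int CARD('n) - aff_dim F))"

definition lin_part :: "('n::finite) relu_net \<Rightarrow> (real^'n) set \<Rightarrow> nat \<Rightarrow> real^'n" where
  "lin_part N P = (SOME A. \<exists>c::nat \<Rightarrow> real.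
      \<forall>x\<in>P. \<forall>k<nout N. netf N x k = A k \<bullet> x + c k)"

definition unit_normal :: "(real^('n::finite)) set \<Rightarrow> (real^'n) set \<Rightarrow> real^'n" where
  "unit_normal P \<sigma> = (SOME e. norm e = 1 \<and> (\<forall>x\<in>\<sigma>. \<forall>y\<in>\<sigma>. e \<bullet> (x - y) = 0)
       \<and> (\<forall>p\<in>P. \<forall>s\<in>\<sigma>. 0 \<le> e \<bullet> (p - s)))"

definition trop_weight :: "('n::finite) relu_net \<Rightarrow> (real^'n) set \<Rightarrow> (real^'n) set \<Rightarrow> (real^'n) set \<Rightarrow> nat \<Rightarrow> real" where
  "trop_weight N P Q \<sigma> = (\<lambda>k. if k < nout N
      then (lin_part N P k - lin_part N Q k) \<bullet> unit_normal P \<sigma> else 0)"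

definition cancellation_free :: "('n::finite) relu_net \<Rightarrow> bool" where
  "cancellation_free N \<longleftrightarrow> (\<forall>\<sigma> P Q.
     \<sigma> \<in> canonical N \<and> aff_dim \<sigma> = int CARD('n) - 1 \<and>
     P \<in> canonical N \<and> Q \<in> canonical N \<and> aff_dim P = int CARD('n) \<and> aff_dim Q = int CARD('n) \<and>
     P \<noteq> Q \<and> \<sigma> = P \<inter> Q \<longrightarrow>
       (trop_weight N P Q \<sigma> = (\<lambda>_. 0) \<longleftrightarrow>
        (\<exists>k\<in>{1..depth N}. \<forall>j<width N k. \<forall>x\<in>rel_interior \<sigma>. pre N k j x < 0)))"

end

theory Submission
  imports Defs
begin


definition cellset :: "('n::finite) relu_net \<Rightarrow> nat \<Rightarrow> (nat \<times> nat \<Rightarrow> int) \<Rightarrow> (real^'n) set" where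
  "cellset N l s = {x. \<forall>l'\<in>{1..l}. \<forall>j<width N l'. sgn_cond (s (l',j)) (pre N l' j x)}"

lemma cellset_0: "cellset N 0 s = UNIV"
  unfolding cellset_def by auto

lemma cellset_Suc: "cellset N (Suc l) s = {x\<in>cellset N l s. \<forall>j<width N (Suc l). sgn_cond (s (Suc l, j)) (pre N (Suc l) j x)}"
proof -
  have "{1..Suc l} = insert (Suc l) {1..l}" by auto
  then show ?thesis unfolding cellset_def by auto
qed

lemma cells_char: "cells N l = {P. P \<noteq> {} \<and> (\<exists>s. P = cellset N l s)}"
proof (induction l)
  case 0 then show ?case by (auto simp: cellset_def)
next
  case (Suc l)
  show ?case
  proof (intro set_eqI iffI)
    fix P assume "P \<in> cells N (Suc l)"
    then obtain R s' where P: "P \<noteq> {}" "R \<in> cells N l" "P = {x\<in>R. \<forall>j<width N (Suc l). sgn_cond (s' j) (pre N (Suc l) j x)}" by auto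
    then obtain s where R: "R = cellset N l s" using Suc by auto
    define s2 where "s2 = (\<lambda>(l',j). if l' = Suc l then s' j else s (l',j))"
    have "cellset N l s2 = cellset N l s" unfolding cellset_def s2_def by auto
    then have "P = cellset N (Suc l) s2" using P R by (auto simp: cellset_Suc s2_def)
    thus "P \<in> {P. P\<noteq>{} \<and> (\<exists>s. P = cellset N (Suc l) s)}" using P by auto
  next
    fix P assume "P \<in> {P. P \<noteq> {} \<and> (\<exists>s. P = cellset N (Suc l) s)}"
    then obtain s where P: "P \<noteq> {}" "P = cellset N (Suc l) s" by auto
    have "P \<subseteq> cellset N l s" using P by (auto simp: cellset_Suc)
    then have "cellset N l s \<in> cells N l" using Suc P by auto
    then show "P \<in> cells N (Suc l)" using P
      by (auto simp: cellset_Suc intro!: bexI[of _ "cellset N l s"] exI[of _ "\<lambda>j. s (Suc l, j)"])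
  qed
qed

lemma pre_cont_Suc: "continuous_on UNIV (pre N (Suc l) j)"
proof (induction l arbitrary: j)
  case 0 then show ?case by (simp add: continuous_intros)
next
  case (Suc l)
  show ?case by (simp only: pre.simps) (intro continuous_intros Suc)
qed

lemma pre_cont: "continuous_on UNIV (pre N l j)"
  by (cases l) (auto simp: pre_cont_Suc)

lemma pre_isCont: "isCont (pre N l j) x"
  using pre_cont continuous_on_eq_continuous_at by blast

definition aff_on :: "(real^'n) set \<Rightarrow> (real^'n \<Rightarrow> real) \<Rightarrow> bool" where
  "aff_on S g \<longleftrightarrow> (\<exists>a c. \<forall>x\<in>S. g x = a \<bullet> x + c)"

lemma aff_on_const: "aff_on S (\<lambda>x. c)"
  unfolding aff_on_def by (rule exI[of _ 0]) auto

lemma aff_on_add: "aff_on S f \<Longrightarrow> aff_on S g \<Longrightarrow> aff_on S (\<lambda>x. f x + g x)"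
  unfolding aff_on_def
proof (elim exE)
  fix a c b d assume "\<forall>x\<in>S. f x = a \<bullet> x + c" "\<forall>x\<in>S. g x = b \<bullet> x + d"
  then show "\<exists>a c. \<forall>x\<in>S. f x + g x = a \<bullet> x + c"
    by (intro exI[of _ "a + b"] exI[of _ "c + d"]) (simp add: inner_add_left)
qed

lemma aff_on_scale: "aff_on S f \<Longrightarrow> aff_on S (\<lambda>x. c * f x)"
  unfolding aff_on_def
proof (elim exE)
  fix a d assume "\<forall>x\<in>S. f x = a \<bullet> x + d"
  then show "\<exists>a c'. \<forall>x\<in>S. c * f x = a \<bullet> x + c'"
    by (intro exI[of _ "c *\<^sub>R a"] exI[of _ "c*d"]) (auto simp: algebra_simps)
qed

lemma aff_on_sum: "finite I \<Longrightarrow> (\<And>i. i \<in> I \<Longrightarrow> aff_on S (f i)) \<Longrightarrow> aff_on S (\<lambda>x. \<Sum>i\<in>I. f i x)"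
proof (induction I rule: finite_induct)
  case empty then show ?case by (simp add: aff_on_const)
next
  case (insert i I)
  then show ?case by (simp add: aff_on_add)
qed

lemma aff_on_max0: "aff_on S g \<Longrightarrow> (\<forall>x\<in>S. 0 \<le> g x) \<or> (\<forall>x\<in>S. g x \<le> 0) \<Longrightarrow> aff_on S (\<lambda>x. max 0 (g x))"
proof (elim disjE)
  assume a: "aff_on S g" "\<forall>x\<in>S. 0 \<le> g x"
  then have "\<forall>x\<in>S. max 0 (g x) = g x" by auto
  then show ?thesis using a(1) unfolding aff_on_def by simp
next
  assume "\<forall>x\<in>S. g x \<le> 0"
  then have "\<forall>x\<in>S. max 0 (g x) = 0" by auto
  then show ?thesis unfolding aff_on_def by (intro exI[of _ 0]) auto
qed

lemma aff_pre:
  assumes fx: "\<And>m i. 1 \<le> m \<Longrightarrow> m < M \<Longrightarrow> i < width N m \<Longrightarrow> (\<forall>x\<in>S. 0 \<le> pre N m i x) \<or> (\<forall>x\<in>S. pre N m i x \<le> 0)"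
  shows "Suc m \<le> M \<Longrightarrow> aff_on S (pre N (Suc m) i)"
proof (induction m arbitrary: i)
  case 0
  show ?case unfolding aff_on_def by (intro exI[of _ "W1 N i"] exI[of _ "bias N 1 i"]) simp
next
  case (Suc m)
  have "aff_on S (\<lambda>x. max 0 (pre N (Suc m) i' x))" if "i' < width N (Suc m)" for i'
    using Suc that by (intro aff_on_max0 fx) auto
  then have "aff_on S (\<lambda>x. (\<Sum>i'<width N (Suc m). Wt N (Suc (Suc m)) i i' * max 0 (pre N (Suc m) i' x)) + bias N (Suc (Suc m)) i)"
    by (intro aff_on_add aff_on_const aff_on_sum aff_on_scale) auto
  then show ?case by simp
qed

lemma sgn_cond_fix: "sgn_cond s t \<Longrightarrow> 0 \<le> t \<or> t \<le> 0"
  by auto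

lemma cellset_aff: "Suc m \<le> Suc L \<Longrightarrow> aff_on (cellset N L s) (pre N (Suc m) i)"
proof (rule aff_pre[where M="Suc L"])
  fix m' i' assume "1 \<le> m'" "m' < Suc L" "i' < width N m'"
  then have "\<forall>x\<in>cellset N L s. sgn_cond (s (m',i')) (pre N m' i' x)" unfolding cellset_def by auto
  then show "(\<forall>x\<in>cellset N L s. 0 \<le> pre N m' i' x) \<or> (\<forall>x\<in>cellset N L s. pre N m' i' x \<le> 0)"
    unfolding sgn_cond_def by (cases "0 < s (m',i')"; cases "s (m',i') < 0") auto
qed

lemma sgn_cond_convex: "sgn_cond s A \<Longrightarrow> sgn_cond s B \<Longrightarrow> 0 \<le> u \<Longrightarrow> 0 \<le> v \<Longrightarrow> u + v = 1 \<Longrightarrow> sgn_cond s (u * A + v * B)"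
  unfolding sgn_cond_def
  by (cases "0 < s"; cases "s < 0") (auto intro: add_nonpos_nonpos mult_nonneg_nonpos)

lemma convex_cellset: "convex (cellset N l s)"
proof (induction l)
  case 0 then show ?case by (simp add: cellset_0)
next
  case (Suc l)
  show ?case unfolding convex_def
  proof (intro ballI allI impI)
    fix x y :: "real^'a" and u v :: real
    assume x: "x \<in> cellset N (Suc l) s" and y: "y \<in> cellset N (Suc l) s" and uv: "0 \<le> u" "0 \<le> v" "u + v = 1"
    have xl: "x \<in> cellset N l s" and yl: "y \<in> cellset N l s" using x y by (auto simp: cellset_Suc)
    have zl: "u *\<^sub>R x + v *\<^sub>R y \<in> cellset N l s" using Suc xl yl uv unfolding convex_def by blast
    have "sgn_cond (s (Suc l, j)) (pre N (Suc l) j (u *\<^sub>R x + v *\<^sub>R y))" if j: "j < width N (Suc l)" for j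
    proof -
      obtain a c where ac: "\<forall>z\<in>cellset N l s. pre N (Suc l) j z = a \<bullet> z + c"
        using cellset_aff[of l l N s j] unfolding aff_on_def by auto
      have "pre N (Suc l) j (u *\<^sub>R x + v *\<^sub>R y) = u * pre N (Suc l) j x + v * pre N (Suc l) j y"
      proof -
        have "pre N (Suc l) j (u *\<^sub>R x + v *\<^sub>R y) = u * (a \<bullet> x) + v * (a \<bullet> y) + c"
          using ac zl by (simp add: inner_add_right)
        also have "\<dots> = u * (a \<bullet> x) + v * (a \<bullet> y) + (u + v) * c" using uv by simp
        also have "\<dots> = u * (a \<bullet> x + c) + v * (a \<bullet> y + c)" by (simp add: algebra_simps)
        finally show ?thesis using ac xl yl by simp
      qed
      then show ?thesis using sgn_cond_convex[OF _ _ uv] x y j by (simp add: cellset_Suc)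
    qed
    then show "u *\<^sub>R x + v *\<^sub>R y \<in> cellset N (Suc l) s" using zl by (simp add: cellset_Suc)
  qed
qed


lemma sgn_cond_0: "sgn_cond s 0"
  unfolding sgn_cond_def by auto

lemma G1: fixes C :: "(real^'n) set" shows "convex C \<Longrightarrow> interior C \<noteq> {} \<Longrightarrow> x \<in> C \<Longrightarrow> open U \<Longrightarrow> x \<in> U \<Longrightarrow> U \<inter> interior C \<noteq> {}"
proof -
  assume a: "convex C" "interior C \<noteq> {}" "x \<in> C" "open U" "x \<in> U"
  have e: "closure (interior C) = closure C" by (rule convex_closure_interior[OF a(1) a(2)])
  have "x \<in> closure C" using a(3) closure_subset by blast
  then have "x \<in> closure (interior C)" using e by simp
  then have "U \<inter> closure (interior C) \<noteq> {}" using a by blast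
  then show ?thesis using open_Int_closure_eq_empty[OF a(4)] by blast
qed

lemma G2:
  fixes a b :: "real^'n"
  assumes "open Op" "Op \<noteq> {}" "\<forall>x\<in>Op. a \<bullet> x + c = b \<bullet> x + d"
  shows "a = b"
proof -
  define w where "w = a - b"
  obtain x0 where x0: "x0 \<in> Op" using assms by auto
  obtain e where e: "e > 0" "ball x0 e \<subseteq> Op" using assms(1) x0 open_contains_ball by blast
  define \<delta> where "\<delta> = e / (2 * (norm w + 1))"
  have "0 < 2 * (norm w + 1)" using norm_ge_zero[of w] by (smt (verit))
  then have dpos: "\<delta> > 0" unfolding \<delta>_def by (rule divide_pos_pos[OF e(1)])
  have "norm (\<delta> *\<^sub>R w) = \<delta> * norm w" using dpos by simp
  also have "\<dots> < e"
  proof -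
    have "norm w < 2 * (norm w + 1)" using norm_ge_zero[of w] by (smt (verit))
    moreover have "0 < 2 * (norm w + 1)" using norm_ge_zero[of w] by (smt (verit))
    ultimately have q: "norm w / (2 * (norm w + 1)) < 1" by (subst divide_less_eq_1_pos) auto
    have "\<delta> * norm w = e * (norm w / (2 * (norm w + 1)))" unfolding \<delta>_def by simp
    also have "\<dots> < e * 1" using q e(1) by (intro mult_strict_left_mono) auto
    finally show ?thesis by simp
  qed
  finally have "x0 + \<delta> *\<^sub>R w \<in> ball x0 e" by (simp add: dist_norm)
  then have x1: "x0 + \<delta> *\<^sub>R w \<in> Op" using e by auto
  have h: "\<And>x. x \<in> Op \<Longrightarrow> w \<bullet> x = d - c" using assms(3) unfolding w_def by (simp add: inner_diff_left algebra_simps)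
  have "w \<bullet> (x0 + \<delta> *\<^sub>R w) = w \<bullet> x0 + \<delta> * (w \<bullet> w)" by (simp add: inner_add_right)
  then have "\<delta> * (w \<bullet> w) = 0" using h[OF x0] h[OF x1] by simp
  then have "w = 0" using dpos by simp
  then show ?thesis unfolding w_def by simp
qed

lemma G3: "\<exists>A c. \<forall>x\<in>cellset N (depth N) s. \<forall>k<nout N. netf N x k = A k \<bullet> x + c k"
proof -
  have "\<forall>k. \<exists>ac. k < nout N \<longrightarrow> (\<forall>x\<in>cellset N (depth N) s. netf N x k = fst ac \<bullet> x + snd ac)"
  proof
    fix k
    obtain a c where "\<forall>x\<in>cellset N (depth N) s. pre N (Suc (depth N)) k x = a \<bullet> x + c"
      using cellset_aff[of "depth N" "depth N" N s k] unfolding aff_on_def by auto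
    then show "\<exists>ac. k < nout N \<longrightarrow> (\<forall>x\<in>cellset N (depth N) s. netf N x k = fst ac \<bullet> x + snd ac)"
      by (intro exI[of _ "(a,c)"]) (simp add: netf_def)
  qed
  then have "\<exists>F. \<forall>k. k < nout N \<longrightarrow> (\<forall>x\<in>cellset N (depth N) s. netf N x k = fst (F k) \<bullet> x + snd (F k))"
    by (rule choice)
  then obtain F where "\<forall>k. k < nout N \<longrightarrow> (\<forall>x\<in>cellset N (depth N) s. netf N x k = fst (F k) \<bullet> x + snd (F k))"
    by blast
  then show ?thesis by (intro exI[of _ "\<lambda>k. fst (F k)"] exI[of _ "\<lambda>k. snd (F k)"]) auto
qed

lemma dead_prop:
  assumes k: "1 \<le> k" and x: "\<forall>j<width N k. pre N k j x < 0" and y: "\<forall>j<width N k. pre N k j y < 0"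
  shows "pre N (Suc k + d) i x = pre N (Suc k + d) i y"
proof (induction d arbitrary: i)
  case 0
  obtain k' where k': "k = Suc k'" using k by (cases k) auto
  have "(\<Sum>i'<width N k. Wt N (Suc k) i i' * max 0 (pre N k i' x)) = 0"
    using x by (intro sum.neutral) auto
  moreover have "(\<Sum>i'<width N k. Wt N (Suc k) i i' * max 0 (pre N k i' y)) = 0"
    using y by (intro sum.neutral) auto
  ultimately show ?case using k' by simp
next
  case (Suc d)
  then show ?case by simp
qed

lemma G4:
  assumes k: "k \<in> {1..depth N}" and y: "\<forall>j<width N k. pre N k j y < 0"
  shows "\<exists>e>0. \<forall>x\<in>ball y e. \<forall>m. netf N x m = netf N y m"
proof -
  have "\<forall>\<^sub>F x in at y. \<forall>j\<in>{..<width N k}. pre N k j x < 0"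
  proof (rule eventually_ball_finite)
    show "\<forall>j\<in>{..<width N k}. \<forall>\<^sub>F x in at y. pre N k j x < 0"
    proof
      fix j assume "j \<in> {..<width N k}"
      then have "pre N k j y < 0" using y by auto
      moreover have "(pre N k j \<longlongrightarrow> pre N k j y) (at y)" using pre_isCont isCont_def by blast
      ultimately show "\<forall>\<^sub>F x in at y. pre N k j x < 0" using order_tendstoD(2) by blast
    qed
  qed auto
  then obtain e where e: "e > 0" "\<forall>x. x \<noteq> y \<and> dist x y < e \<longrightarrow> (\<forall>j\<in>{..<width N k}. pre N k j x < 0)"
    unfolding eventually_at by auto
  have "\<forall>x\<in>ball y e. \<forall>m. netf N x m = netf N y m"
  proof (intro ballI allI)
    fix x m assume "x \<in> ball y e"
    then have xx: "\<forall>j<width N k. pre N k j x < 0" using e y by (cases "x = y") (auto simp: dist_commute)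
    have "k \<le> depth N" using k by simp
    then obtain d where d: "depth N = k + d" using le_Suc_ex by blast
    have F: "pre N (Suc k + d) m x = pre N (Suc k + d) m y"
      by (rule dead_prop[OF _ xx y]) (use k in simp)
    have eq: "Suc (depth N) = Suc k + d" using d by simp
    show "netf N x m = netf N y m" unfolding netf_def eq by (rule F)
  qed
  then show ?thesis using e by blast
qed

lemma G5:
  assumes "interior C \<noteq> {}" "\<forall>x\<in>C. \<forall>k<nout N. netf N x k = A k \<bullet> x + c k" "k < nout N"
  shows "lin_part N C k = A k"
proof -
  have "\<exists>A c. \<forall>x\<in>C. \<forall>k<nout N. netf N x k = A k \<bullet> x + c k" using assms by blast
  then have "\<exists>c. \<forall>x\<in>C. \<forall>k<nout N. netf N x k = lin_part N C k \<bullet> x + c k"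
    unfolding lin_part_def by (rule someI_ex)
  then obtain c' where c': "\<forall>x\<in>C. \<forall>k<nout N. netf N x k = lin_part N C k \<bullet> x + c' k" by blast
  show ?thesis
  proof (rule G2[of "interior C"])
    show "\<forall>x\<in>interior C. lin_part N C k \<bullet> x + c' k = A k \<bullet> x + c k"
    proof
      fix x assume "x \<in> interior C"
      then have "x \<in> C" using interior_subset by blast
      then show "lin_part N C k \<bullet> x + c' k = A k \<bullet> x + c k" using c' assms(2,3) by metis
    qed
  qed (use assms in auto)
qed





lemma small_step:
  fixes v :: "real^'n"
  assumes r: "r > 0"
  shows "\<exists>\<epsilon>>0. \<epsilon> \<le> 1 \<and> norm (\<epsilon> *\<^sub>R v) < r"
proof -
  have d: "0 < 2 * (norm v + 1)" using norm_ge_zero[of v] by (smt (verit))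
  define \<epsilon> where "\<epsilon> = min 1 (r / (2 * (norm v + 1)))"
  have epos: "\<epsilon> > 0" unfolding \<epsilon>_def using r d by simp
  have "norm (\<epsilon> *\<^sub>R v) = \<epsilon> * norm v" using epos by simp
  also have "\<dots> \<le> (r / (2 * (norm v + 1))) * norm v" unfolding \<epsilon>_def by (intro mult_right_mono) auto
  also have "\<dots> < r"
  proof -
    have "norm v < 2 * (norm v + 1)" using norm_ge_zero[of v] by (smt (verit))
    then have q: "norm v / (2 * (norm v + 1)) < 1" using d by (subst divide_less_eq_1_pos) auto
    have "(r / (2 * (norm v + 1))) * norm v = r * (norm v / (2 * (norm v + 1)))" by simp
    also have "\<dots> < r * 1" using q r by (intro mult_strict_left_mono) auto
    finally show ?thesis by simp
  qed
  finally show ?thesis using epos unfolding \<epsilon>_def by (intro exI[of _ \<epsilon>]) (auto simp: \<epsilon>_def)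
qed

lemma card_n_pos: "0 < CARD('n::finite)" by simp

lemma aff_dim_hyper_ball:
  fixes a p :: "real^'n"
  assumes a: "a \<noteq> 0" and r: "r > 0"
  shows "aff_dim (ball p r \<inter> {x. a \<bullet> (x - p) = 0}) = int CARD('n) - 1"
proof -
  define S where "S = {x. a \<bullet> x = a \<bullet> p}"
  have eq: "ball p r \<inter> {x. a \<bullet> (x - p) = 0} = S \<inter> ball p r" unfolding S_def by (auto simp: inner_diff_right)
  have "affine hull (S \<inter> ball p r) = affine hull S"
    by (rule affine_hull_convex_Int_open) (use r in \<open>auto simp: S_def convex_hyperplane\<close>)
  then have "aff_dim (S \<inter> ball p r) = aff_dim S" by (metis aff_dim_affine_hull)
  also have "\<dots> = int (DIM(real^'n) - 1)" unfolding S_def by (rule aff_dim_hyperplane[OF a])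
  also have "\<dots> = int CARD('n) - 1" using card_n_pos[where 'n='n] by (simp add: of_nat_diff)
  finally show ?thesis using eq by simp
qed

lemma aff_dim_ball: "r > 0 \<Longrightarrow> aff_dim (ball (p::real^'n) r) = int CARD('n)"
  by (simp add: aff_dim_open)

lemma nondeg:
  fixes g h p :: "real^'n"
  assumes r: "r > 0" and D: "(g \<bullet> g) * (h \<bullet> h) = (g \<bullet> h)^2"
  shows "int CARD('n) - 1 \<le> aff_dim (ball p r \<inter> {x. g \<bullet> (x - p) = 0 \<and> h \<bullet> (x - p) = 0})"
proof (cases "g = 0")
  case True
  show ?thesis
  proof (cases "h = 0")
    case True
    then have "ball p r \<inter> {x. g \<bullet> (x - p) = 0 \<and> h \<bullet> (x - p) = 0} = ball p r" using \<open>g = 0\<close> by auto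
    then show ?thesis using aff_dim_ball[OF r, of p] by simp
  next
    case False
    have "ball p r \<inter> {x. g \<bullet> (x - p) = 0 \<and> h \<bullet> (x - p) = 0} = ball p r \<inter> {x. h \<bullet> (x - p) = 0}" using \<open>g = 0\<close> by auto
    then show ?thesis using aff_dim_hyper_ball[OF False r, of p] by simp
  qed
next
  case False
  define c where "c = (g \<bullet> h) / (g \<bullet> g)"
  have gg: "g \<bullet> g > 0" using False by simp
  have "(h - c *\<^sub>R g) \<bullet> (h - c *\<^sub>R g) = h \<bullet> h - 2 * c * (g \<bullet> h) + c^2 * (g \<bullet> g)"
    by (simp add: inner_diff_left inner_diff_right inner_commute power2_eq_square algebra_simps)
  also have "\<dots> = ((g \<bullet> g) * (h \<bullet> h) - (g \<bullet> h)^2) / (g \<bullet> g)"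
    unfolding c_def using gg by (simp add: field_simps power2_eq_square)
  also have "\<dots> = 0" using D by simp
  finally have "h = c *\<^sub>R g" by simp
  then have "ball p r \<inter> {x. g \<bullet> (x - p) = 0 \<and> h \<bullet> (x - p) = 0} = ball p r \<inter> {x. g \<bullet> (x - p) = 0}" by auto
  then show ?thesis using aff_dim_hyper_ball[OF False r, of p] by simp
qed

lemma indep_surj:
  fixes g h :: "real^'n"
  assumes D: "(g \<bullet> g) * (h \<bullet> h) \<noteq> (g \<bullet> h)^2"
  shows "\<exists>v. g \<bullet> v = \<alpha> \<and> h \<bullet> v = \<beta>"
proof -
  define d where "d = (g \<bullet> g) * (h \<bullet> h) - (g \<bullet> h)^2"
  have d0: "d \<noteq> 0" using D unfolding d_def by simp
  define x where "x = (\<alpha> * (h \<bullet> h) - \<beta> * (g \<bullet> h)) / d"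
  define y where "y = (\<beta> * (g \<bullet> g) - \<alpha> * (g \<bullet> h)) / d"
  have n1: "(\<alpha> * (h \<bullet> h) - \<beta> * (g \<bullet> h)) * (g \<bullet> g) + (\<beta> * (g \<bullet> g) - \<alpha> * (g \<bullet> h)) * (g \<bullet> h) = \<alpha> * d"
    unfolding d_def by (simp add: algebra_simps power2_eq_square)
  have n2: "(\<alpha> * (h \<bullet> h) - \<beta> * (g \<bullet> h)) * (g \<bullet> h) + (\<beta> * (g \<bullet> g) - \<alpha> * (g \<bullet> h)) * (h \<bullet> h) = \<beta> * d"
    unfolding d_def by (simp add: algebra_simps power2_eq_square)
  have "g \<bullet> (x *\<^sub>R g + y *\<^sub>R h) = x * (g \<bullet> g) + y * (g \<bullet> h)" by (simp add: inner_add_right)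
  also have "\<dots> = ((\<alpha> * (h \<bullet> h) - \<beta> * (g \<bullet> h)) * (g \<bullet> g) + (\<beta> * (g \<bullet> g) - \<alpha> * (g \<bullet> h)) * (g \<bullet> h)) / d"
    unfolding x_def y_def by (simp add: add_divide_distrib)
  also have "\<dots> = \<alpha>" using n1 d0 by simp
  finally have 1: "g \<bullet> (x *\<^sub>R g + y *\<^sub>R h) = \<alpha>" .
  have "h \<bullet> (x *\<^sub>R g + y *\<^sub>R h) = x * (g \<bullet> h) + y * (h \<bullet> h)" by (simp add: inner_add_right inner_commute)
  also have "\<dots> = ((\<alpha> * (h \<bullet> h) - \<beta> * (g \<bullet> h)) * (g \<bullet> h) + (\<beta> * (g \<bullet> g) - \<alpha> * (g \<bullet> h)) * (h \<bullet> h)) / d"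
    unfolding x_def y_def by (simp add: add_divide_distrib)
  also have "\<dots> = \<beta>" using n2 d0 by simp
  finally have 2: "h \<bullet> (x *\<^sub>R g + y *\<^sub>R h) = \<beta>" .
  show ?thesis using 1 2 by blast
qed

lemma LA:
  fixes g h a :: "real^'n"
  assumes u1: "u1 = 1 \<or> u1 = (-1::real)" and u2: "u2 = 1 \<or> u2 = (-1::real)"
    and surj: "\<And>\<alpha> \<beta>. \<exists>v. g \<bullet> v = \<alpha> \<and> h \<bullet> v = \<beta>"
    and c1: "\<And>v. g \<bullet> v = 0 \<Longrightarrow> 0 \<le> u2 * (h \<bullet> v) \<Longrightarrow> a \<bullet> v = 0"
    and c2: "\<And>v. 0 \<le> u1 * (g \<bullet> v) \<Longrightarrow> h \<bullet> v = 0 \<Longrightarrow> a \<bullet> v = 0"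
  shows "a = 0"
proof -
  have uu1: "u1 * u1 = 1" and uu2: "u2 * u2 = 1" using u1 u2 by auto
  obtain w1 where w1: "g \<bullet> w1 = 0" "h \<bullet> w1 = u2" using surj by blast
  obtain w2 where w2: "g \<bullet> w2 = u1" "h \<bullet> w2 = 0" using surj by blast
  have a1: "a \<bullet> w1 = 0" using c1[OF w1(1)] w1(2) uu2 by simp
  have a2: "a \<bullet> w2 = 0" using c2[OF _ w2(2)] w2(1) uu1 by simp
  define w where "w = a - (u2 * (h \<bullet> a)) *\<^sub>R w1 - (u1 * (g \<bullet> a)) *\<^sub>R w2"
  have gw: "g \<bullet> w = 0" unfolding w_def using w1 w2 uu1
    by (simp add: inner_diff_right algebra_simps)
  have hw: "h \<bullet> w = 0" unfolding w_def using w1 w2 uu2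
    by (simp add: inner_diff_right algebra_simps)
  have aw: "a \<bullet> w = 0" using c1[OF gw] hw by simp
  have "a \<bullet> a = a \<bullet> w + (u2 * (h \<bullet> a)) * (a \<bullet> w1) + (u1 * (g \<bullet> a)) * (a \<bullet> w2)"
    unfolding w_def by (simp add: inner_diff_right)
  then have "a \<bullet> a = 0" using aw a1 a2 by simp
  then show ?thesis by simp
qed

lemma seg_zero:
  fixes P :: "(real^'n) set"
  assumes P: "convex P" "p \<in> P" and r: "r > 0" and aff: "\<forall>x\<in>P. hf x = A \<bullet> x + c"
    and z: "\<forall>x\<in>P \<inter> ball p r. hf x = 0" and y: "y \<in> P"
  shows "hf y = 0"
proof -
  obtain \<epsilon> where e: "\<epsilon> > 0" "\<epsilon> \<le> 1" "norm (\<epsilon> *\<^sub>R (y - p)) < r" using small_step[OF r] by blast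
  define q where "q = (1 - \<epsilon>) *\<^sub>R p + \<epsilon> *\<^sub>R y"
  have qP: "q \<in> P" unfolding q_def using P y e by (intro convexD) auto
  have "q - p = \<epsilon> *\<^sub>R (y - p)" unfolding q_def by (simp add: algebra_simps)
  then have "norm (p - q) = norm (\<epsilon> *\<^sub>R (y - p))" by (metis norm_minus_commute)
  then have "q \<in> ball p r" using e by (simp add: dist_norm)
  then have hq: "hf q = 0" using z qP by blast
  have hp: "hf p = 0" using z P r by simp
  have "hf q = (1 - \<epsilon>) * (A \<bullet> p + c) + \<epsilon> * (A \<bullet> y + c)" using aff qP unfolding q_def
    by (simp add: inner_add_right algebra_simps)
  also have "\<dots> = (1 - \<epsilon>) * hf p + \<epsilon> * hf y" using aff P y by simp
  finally show ?thesis using hq hp e by simp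
qed

lemma sgn_cond_compat: "v \<noteq> 0 \<Longrightarrow> sgn_cond s v \<Longrightarrow> sgn_cond s' v \<Longrightarrow> sgn_cond s w \<Longrightarrow> sgn_cond s' w"
  unfolding sgn_cond_def by (cases "0 < s"; cases "s < 0"; cases "0 < s'"; cases "s' < 0") auto

lemma same_germ:
  fixes N :: "'n::finite relu_net"
  assumes ps: "p \<in> cellset N L s" and r: "r > 0"
    and g: "\<forall>x\<in>ball p r. x \<in> cellset N L s \<longrightarrow> x \<in> cellset N L s'"
  shows "cellset N L s \<subseteq> cellset N L s'"
proof
  fix y assume y: "y \<in> cellset N L s"
  show "y \<in> cellset N L s'" unfolding cellset_def
  proof (intro CollectI ballI allI impI)
    fix l j assume l: "l \<in> {1..L}" and j: "j < width N l"
    obtain l' where l': "l = Suc l'" using l by (cases l) auto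
    obtain A c where ac: "\<forall>x\<in>cellset N L s. pre N l j x = A \<bullet> x + c"
      using cellset_aff[of l' L N s j] l l' unfolding aff_on_def by auto
    have cs: "\<forall>x\<in>cellset N L s. sgn_cond (s (l,j)) (pre N l j x)" using l j unfolding cellset_def by blast
    have cs': "\<forall>x\<in>cellset N L s \<inter> ball p r. sgn_cond (s' (l,j)) (pre N l j x)"
      using g l j unfolding cellset_def by blast
    show "sgn_cond (s' (l,j)) (pre N l j y)"
    proof (cases "\<forall>x\<in>cellset N L s \<inter> ball p r. pre N l j x = 0")
      case True
      then have "pre N l j y = 0" using seg_zero[OF convex_cellset ps r ac True y] by simp
      then show ?thesis using sgn_cond_0 by simp
    next
      case False
      then obtain x0 where x0: "x0 \<in> cellset N L s \<inter> ball p r" "pre N l j x0 \<noteq> 0" by blast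
      show ?thesis using sgn_cond_compat[OF x0(2)] cs cs' x0(1) y by blast
    qed
  qed
qed


lemma aff_dim_germ:
  fixes C :: "(real^'n) set"
  assumes "convex C" "p \<in> C" "r > 0"
  shows "aff_dim C = aff_dim (C \<inter> ball p r)"
proof -
  have "affine hull (C \<inter> ball p r) = affine hull C"
    by (rule affine_hull_convex_Int_open) (use assms in auto)
  then show ?thesis by (metis aff_dim_affine_hull)
qed

lemma flat_from_dead:
  fixes N :: "'n::finite relu_net"
  assumes C: "convex C" "interior C \<noteq> {}" "p \<in> C" "y \<in> C"
    and ac: "\<forall>x\<in>C. \<forall>k<nout N. netf N x k = A k \<bullet> x + c k"
    and e: "e > 0" "\<forall>x\<in>ball y e. \<forall>m. netf N x m = netf N y m"
  shows "\<forall>x\<in>C. \<forall>k<nout N. netf N x k = netf N p k"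
proof (intro ballI allI impI)
  fix x k assume x: "x \<in> C" and k: "k < nout N"
  have ne: "ball y e \<inter> interior C \<noteq> {}" using G1[OF C(1,2,4)] e by simp
  have "A k = 0"
  proof (rule G2[of "ball y e \<inter> interior C" _ "c k" _ "netf N y k"])
    show "\<forall>z\<in>ball y e \<inter> interior C. A k \<bullet> z + c k = 0 \<bullet> z + netf N y k"
    proof
      fix z assume z: "z \<in> ball y e \<inter> interior C"
      then have zC: "z \<in> C" using interior_subset by blast
      have "netf N z k = netf N y k" using z e(2) by blast
      then show "A k \<bullet> z + c k = 0 \<bullet> z + netf N y k" using ac zC k by simp
    qed
  qed (use ne in auto)
  then show "netf N x k = netf N p k" using ac x C(3) k by simp
qed


lemma sgn_cond_pos: "0 < v \<Longrightarrow> sgn_cond s v \<Longrightarrow> 0 < w \<Longrightarrow> sgn_cond s w"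
  unfolding sgn_cond_def by (cases "0 < s"; cases "s < 0") auto

lemma sgn_cond_neg: "v < 0 \<Longrightarrow> sgn_cond s v \<Longrightarrow> w < 0 \<Longrightarrow> sgn_cond s w"
  unfolding sgn_cond_def by (cases "0 < s"; cases "s < 0") auto

lemma sgn_cond_pos_t: "0 < v \<Longrightarrow> sgn_cond s v \<Longrightarrow> 0 < s"
  unfolding sgn_cond_def by (cases "0 < s"; cases "s < 0") auto

lemma sgn_cond_neg_t: "v < 0 \<Longrightarrow> sgn_cond s v \<Longrightarrow> s < 0"
  unfolding sgn_cond_def by (cases "0 < s"; cases "s < 0") auto

locale loc =
  fixes N :: "'n::finite relu_net" and \<tau> :: "(real^'n) set" and t :: "nat \<times> nat \<Rightarrow> int"
    and p :: "real^'n" and r :: real and a j1 b j2 :: nat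
  assumes st: "supertransversal N" and cf: "cancellation_free N"
    and tau: "\<tau> = cellset N (depth N) t" and tau_ne: "\<tau> \<noteq> {}" and tau_bp: "\<tau> \<subseteq> {x. breakpoint N x}"
    and dim: "aff_dim \<tau> = int CARD('n) - 2"
    and p: "p \<in> rel_interior \<tau>"
    and r: "r > 0"
    and rball: "\<forall>x\<in>ball p r. \<forall>l\<in>{1..depth N}. \<forall>j<width N l.
        (0 < pre N l j p \<longrightarrow> 0 < pre N l j x) \<and> (pre N l j p < 0 \<longrightarrow> pre N l j x < 0)"
    and beta: "{(l,j). l\<in>{1..depth N} \<and> j<width N l \<and> \<tau> \<subseteq> bent N l j} = {(a,j1),(b,j2)}"
    and bne: "(a,j1) \<noteq> (b,j2)" and ab: "a \<le> b"
begin

lemma pin: "p \<in> \<tau>" using p rel_interior_subset by blast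

lemma conv_tau: "convex \<tau>" using tau convex_cellset by simp

lemma tau_cond: "y \<in> \<tau> \<Longrightarrow> l \<in> {1..depth N} \<Longrightarrow> j < width N l \<Longrightarrow> sgn_cond (t (l,j)) (pre N l j y)"
  using tau unfolding cellset_def by auto

lemma zero_tau:
  assumes l: "l \<in> {1..depth N}" and j: "j < width N l" and z: "pre N l j p = 0" and y: "y \<in> \<tau>"
  shows "pre N l j y = 0"
proof (cases "y = p")
  case True then show ?thesis using z by simp
next
  case False
  obtain l' where l': "l = Suc l'" using l by (cases l) auto
  obtain g c where gc: "\<forall>x\<in>\<tau>. pre N l j x = g \<bullet> x + c"
    using cellset_aff[of l' "depth N" N t j] l l' tau unfolding aff_on_def by auto
  obtain e where e: "e > 0" "cball p e \<inter> affine hull \<tau> \<subseteq> \<tau>" using p mem_rel_interior_cball by blast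
  have npos: "norm (y - p) > 0" using False by simp
  define \<delta> where "\<delta> = e / norm (y - p)"
  have dpos: "\<delta> > 0" unfolding \<delta>_def using e npos by simp
  define q where "q = (1 + \<delta>) *\<^sub>R p + (- \<delta>) *\<^sub>R y"
  have "q \<in> affine hull \<tau>" unfolding q_def
    by (rule mem_affine[OF affine_affine_hull]) (use pin y hull_inc in auto)
  moreover have "q - p = \<delta> *\<^sub>R (p - y)" unfolding q_def by (simp add: algebra_simps)
  then have "dist p q = \<delta> * norm (y - p)"
  proof -
    assume qp: "q - p = \<delta> *\<^sub>R (p - y)"
    have "dist p q = norm (q - p)" by (simp add: dist_norm norm_minus_commute)
    also have "\<dots> = \<delta> * norm (p - y)" using qp dpos by simp
    also have "\<dots> = \<delta> * norm (y - p)" by (simp add: norm_minus_commute)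
    finally show ?thesis .
  qed
  then have "dist p q = e" unfolding \<delta>_def using npos by simp
  ultimately have q: "q \<in> \<tau>" using e by auto
  have "pre N l j q = g \<bullet> q + c" using gc q by simp
  also have "\<dots> = (1 + \<delta>) * (g \<bullet> p + c) - \<delta> * (g \<bullet> y + c)" unfolding q_def by (simp add: inner_add_right algebra_simps)
  also have "\<dots> = (1 + \<delta>) * pre N l j p - \<delta> * pre N l j y" using gc pin y by simp
  finally have pq: "pre N l j q = - \<delta> * pre N l j y" using z by simp
  have s1: "sgn_cond (t (l,j)) (pre N l j y)" using tau_cond[OF y l j] .
  have s2: "sgn_cond (t (l,j)) (pre N l j q)" using tau_cond[OF q l j] .
  have A: "0 \<le> - \<delta> * v \<longleftrightarrow> v \<le> 0" for v using dpos by (simp add: mult_le_0_iff)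
  have B: "- \<delta> * v \<le> 0 \<longleftrightarrow> 0 \<le> v" for v using dpos by (simp add: zero_le_mult_iff)
  show ?thesis
  proof (cases "0 < t (l,j)")
    case True then show ?thesis using s1 s2 A unfolding pq sgn_cond_def by simp
  next
    case False
    then show ?thesis using s1 s2 B unfolding pq sgn_cond_def by (cases "t (l,j) < 0") simp_all
  qed
qed

lemma beta_a: "a \<in> {1..depth N}" "j1 < width N a" "\<tau> \<subseteq> bent N a j1"
  using beta by (auto simp: set_eq_iff)

lemma beta_b: "b \<in> {1..depth N}" "j2 < width N b" "\<tau> \<subseteq> bent N b j2"
  using beta by (auto simp: set_eq_iff)

lemma bent_zero: "x \<in> bent N l j \<Longrightarrow> pre N l j x = 0"
  unfolding bent_def by auto

lemma za_p: "pre N a j1 p = 0" using beta_a(3) pin bent_zero by blast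
lemma zb_p: "pre N b j2 p = 0" using beta_b(3) pin bent_zero by blast

lemma D1:
  assumes l: "l \<in> {1..depth N}" and j: "j < width N l" and z: "pre N l j p = 0"
    and n1: "(l,j) \<noteq> (a,j1)" and n2: "(l,j) \<noteq> (b,j2)" and x: "x \<in> ball p r"
  shows "pre N l j x = 0"
proof (rule ccontr)
  assume ne: "pre N l j x \<noteq> 0"
  define sx where "sx = (\<lambda>(l',j'). if 0 < pre N l' j' x then 1 else if pre N l' j' x < 0 then -1 else (0::int))"
  define R where "R = cellset N (l-1) sx"
  have xR: "x \<in> R" unfolding R_def cellset_def sx_def sgn_cond_def by auto
  have tauR: "\<tau> \<subseteq> R"
  proof
    fix y assume y: "y \<in> \<tau>"
    show "y \<in> R" unfolding R_def cellset_def
    proof (intro CollectI ballI allI impI)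
      fix l' j' assume l': "l' \<in> {1..l-1}" and j': "j' < width N l'"
      have l'r: "l' \<in> {1..depth N}" using l' l by auto
      consider "pre N l' j' p = 0" | "0 < pre N l' j' p" | "pre N l' j' p < 0" by linarith
      then show "sgn_cond (sx (l', j')) (pre N l' j' y)"
      proof cases
        case 1
        then show ?thesis using zero_tau[OF l'r j' 1 y] sgn_cond_0 by simp
      next
        case 2
        then have "0 < pre N l' j' x" using rball x l'r j' by blast
        then have "sx (l',j') = 1" unfolding sx_def by simp
        moreover have "0 < t (l',j')" using sgn_cond_pos_t[OF 2 tau_cond[OF pin l'r j']] .
        then have "0 \<le> pre N l' j' y" using tau_cond[OF y l'r j'] unfolding sgn_cond_def by simp
        ultimately show ?thesis unfolding sgn_cond_def by simp
      next
        case 3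
        then have "pre N l' j' x < 0" using rball x l'r j' by blast
        then have "sx (l',j') = -1" unfolding sx_def by simp
        moreover have "t (l',j') < 0" using sgn_cond_neg_t[OF 3 tau_cond[OF pin l'r j']] .
        then have "pre N l' j' y \<le> 0" using tau_cond[OF y l'r j'] unfolding sgn_cond_def by simp
        ultimately show ?thesis unfolding sgn_cond_def by simp
      qed
    qed
  qed
  have Rc: "R \<in> cells N (l-1)" using xR unfolding cells_char R_def by auto
  have pR: "p \<in> R" using tauR pin by blast
  have "\<tau> \<subseteq> bent N l j"
  proof
    fix y assume y: "y \<in> \<tau>"
    have "y \<in> {z\<in>R. pre N l j z = 0}" using y tauR zero_tau[OF l j z y] by auto
    moreover have "{z\<in>R. pre N l j z = 0} \<in> {{z\<in>R. pre N l j z = 0} | R. R \<in> cells N (l - 1) \<and>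
        (\<exists>x\<in>R. \<exists>y\<in>R. pre N l j x \<noteq> pre N l j y)}"
    proof (intro CollectI exI[of _ R] conjI refl Rc)
      show "\<exists>x\<in>R. \<exists>y\<in>R. pre N l j x \<noteq> pre N l j y"
        by (rule bexI[OF bexI[of _ p] xR]) (use pR ne z in auto)
    qed
    ultimately show "y \<in> bent N l j" unfolding bent_def by blast
  qed
  then have "(l,j) \<in> {(l,j). l\<in>{1..depth N} \<and> j<width N l \<and> \<tau> \<subseteq> bent N l j}" using l j by simp
  then have "(l,j) \<in> {(a,j1),(b,j2)}" by (subst beta[symmetric])
  then show False using n1 n2 by blast
qed

lemma germ:
  assumes ps: "p \<in> cellset N (depth N) s" and x: "x \<in> ball p r"
  shows "x \<in> cellset N (depth N) s \<longleftrightarrow>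
    sgn_cond (s (a,j1)) (pre N a j1 x) \<and> sgn_cond (s (b,j2)) (pre N b j2 x)"
proof
  assume "x \<in> cellset N (depth N) s"
  then show "sgn_cond (s (a,j1)) (pre N a j1 x) \<and> sgn_cond (s (b,j2)) (pre N b j2 x)"
    using beta_a beta_b unfolding cellset_def by blast
next
  assume h: "sgn_cond (s (a,j1)) (pre N a j1 x) \<and> sgn_cond (s (b,j2)) (pre N b j2 x)"
  show "x \<in> cellset N (depth N) s" unfolding cellset_def
  proof (intro CollectI ballI allI impI)
    fix l j assume l: "l \<in> {1..depth N}" and j: "j < width N l"
    have sp: "sgn_cond (s (l,j)) (pre N l j p)" using ps l j unfolding cellset_def by blast
    show "sgn_cond (s (l,j)) (pre N l j x)"
    proof (cases "(l,j) = (a,j1) \<or> (l,j) = (b,j2)")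
      case True then show ?thesis using h by auto
    next
      case False
      consider "pre N l j p = 0" | "0 < pre N l j p" | "pre N l j p < 0" by linarith
      then show ?thesis
      proof cases
        case 1 then show ?thesis using D1[OF l j 1 _ _ x] False sgn_cond_0 by auto
      next
        case 2 then show ?thesis using sgn_cond_pos[OF 2 sp] rball x l j by blast
      next
        case 3 then show ?thesis using sgn_cond_neg[OF 3 sp] rball x l j by blast
      qed
    qed
  qed
qed

lemma p_ball: "p \<in> ball p r" using r by simp

lemma z1_lin: "\<exists>g. \<forall>x\<in>ball p r. pre N a j1 x = g \<bullet> (x - p)"
proof -
  obtain a' where a': "a = Suc a'" using beta_a(1) by (cases a) auto
  have "aff_on (ball p r) (pre N (Suc a') j1)"
  proof (rule aff_pre[where M = a])
    fix m i assume m: "1 \<le> m" "m < a" and i: "i < width N m"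
    have mr: "m \<in> {1..depth N}" using m beta_a(1) by auto
    consider "pre N m i p = 0" | "0 < pre N m i p" | "pre N m i p < 0" by linarith
    then show "(\<forall>x\<in>ball p r. 0 \<le> pre N m i x) \<or> (\<forall>x\<in>ball p r. pre N m i x \<le> 0)"
    proof cases
      case 1
      have "(m,i) \<noteq> (a,j1)" "(m,i) \<noteq> (b,j2)" using m ab by auto
      then show ?thesis using D1[OF mr i 1] by auto
    next
      case 2
      then have "\<forall>x\<in>ball p r. 0 < pre N m i x" using rball mr i by blast
      then show ?thesis by (simp add: less_imp_le)
    next
      case 3
      then have "\<forall>x\<in>ball p r. pre N m i x < 0" using rball mr i by blast
      then show ?thesis by (simp add: less_imp_le)
    qed
  qed (use a' in simp)
  then obtain g c where gc: "\<forall>x\<in>ball p r. pre N a j1 x = g \<bullet> x + c" unfolding aff_on_def a' by auto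
  have "pre N a j1 p = g \<bullet> p + c" using gc p_ball by blast
  then have "c = - (g \<bullet> p)" using za_p by linarith
  then show ?thesis using gc by (intro exI[of _ g]) (simp add: inner_diff_right)
qed

lemma z2_lin:
  assumes u: "u = 1 \<or> u = (-1::real)"
  shows "\<exists>g. \<forall>x\<in>ball p r. 0 \<le> u * pre N a j1 x \<longrightarrow> pre N b j2 x = g \<bullet> (x - p)"
proof -
  define S where "S = {x\<in>ball p r. 0 \<le> u * pre N a j1 x}"
  obtain b' where b': "b = Suc b'" using beta_b(1) by (cases b) auto
  have "aff_on S (pre N (Suc b') j2)"
  proof (rule aff_pre[where M = b])
    fix m i assume m: "1 \<le> m" "m < b" and i: "i < width N m"
    have mr: "m \<in> {1..depth N}" using m beta_b(1) by auto
    show "(\<forall>x\<in>S. 0 \<le> pre N m i x) \<or> (\<forall>x\<in>S. pre N m i x \<le> 0)"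
    proof (cases "(m,i) = (a,j1)")
      case True
      then show ?thesis using u unfolding S_def by auto
    next
      case False
      consider "pre N m i p = 0" | "0 < pre N m i p" | "pre N m i p < 0" by linarith
      then show ?thesis
      proof cases
        case 1
        have "(m,i) \<noteq> (b,j2)" using m by auto
        then show ?thesis using D1[OF mr i 1 False] unfolding S_def by auto
      next
        case 2
        then have "\<forall>x\<in>ball p r. 0 < pre N m i x" using rball mr i by blast
        then show ?thesis unfolding S_def by (simp add: less_imp_le)
      next
        case 3
        then have "\<forall>x\<in>ball p r. pre N m i x < 0" using rball mr i by blast
        then show ?thesis unfolding S_def by (simp add: less_imp_le)
      qed
    qed
  qed (use b' in simp)
  then obtain g c where gc: "\<forall>x\<in>S. pre N b j2 x = g \<bullet> x + c" unfolding aff_on_def b' by auto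
  have pS: "p \<in> S" unfolding S_def using p_ball za_p by simp
  have "pre N b j2 p = g \<bullet> p + c" using gc pS by blast
  then have "c = - (g \<bullet> p)" using zb_p by linarith
  then show ?thesis using gc unfolding S_def by (intro exI[of _ g]) (simp add: inner_diff_right)
qed

end



lemma sgn_cond_u: "u = 1 \<or> u = -1 \<Longrightarrow> sgn_cond u v \<longleftrightarrow> 0 \<le> of_int u * v"
  unfolding sgn_cond_def by auto

lemma sgn_cond_zero: "sgn_cond 0 v \<longleftrightarrow> v = 0"
  unfolding sgn_cond_def by auto

lemma sgn_cond_sgn: "sgn_cond (sgn s) v = sgn_cond s v"
  unfolding sgn_cond_def by (auto simp: sgn_if)

lemma cellset_meet:
  assumes ne: "\<And>l j. (l,j) \<noteq> k \<Longrightarrow> s (l,j) = s' (l,j)" and sk: "s k = 1" and sk': "s' k = -1"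
  shows "cellset N L s \<inter> cellset N L s' = cellset N L (s(k := 0))"
proof (intro set_eqI iffI)
  fix x assume x: "x \<in> cellset N L s \<inter> cellset N L s'"
  show "x \<in> cellset N L (s(k := 0))" unfolding cellset_def
  proof (intro CollectI ballI allI impI)
    fix l j assume l: "l \<in> {1..L}" and j: "j < width N l"
    have c1: "sgn_cond (s (l,j)) (pre N l j x)" and c2: "sgn_cond (s' (l,j)) (pre N l j x)"
      using x l j unfolding cellset_def by auto
    show "sgn_cond ((s(k := 0)) (l,j)) (pre N l j x)"
    proof (cases "(l,j) = k")
      case True
      then show ?thesis using c1 c2 sk sk' unfolding sgn_cond_def by auto
    next
      case False
      then show ?thesis using c1 by simp
    qed
  qed
next
  fix x assume x: "x \<in> cellset N L (s(k := 0))"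
  have both: "x \<in> cellset N L s \<and> x \<in> cellset N L s'" unfolding cellset_def
  proof (intro conjI CollectI ballI allI impI)
    fix l j assume l: "l \<in> {1..L}" and j: "j < width N l"
    have c: "sgn_cond ((s(k := 0)) (l,j)) (pre N l j x)" using x l j unfolding cellset_def by auto
    show "sgn_cond (s (l,j)) (pre N l j x)"
    proof (cases "(l,j) = k")
      case True
      then have "pre N l j x = 0" using c unfolding sgn_cond_def by auto
      then show ?thesis using sgn_cond_0 by simp
    next
      case False
      then show ?thesis using c by simp
    qed
    show "sgn_cond (s' (l,j)) (pre N l j x)"
    proof (cases "(l,j) = k")
      case True
      then have "pre N l j x = 0" using c unfolding sgn_cond_def by auto
      then show ?thesis using sgn_cond_0 by simp
    next
      case False
      then show ?thesis using c ne[OF False] by simp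
    qed
  qed
  then show "x \<in> cellset N L s \<inter> cellset N L s'" by blast
qed

locale loc2 = loc +
  fixes g1 gp gm :: "real^'n"
  assumes z1: "\<forall>x\<in>ball p r. pre N a j1 x = g1 \<bullet> (x - p)"
    and z2p: "\<forall>x\<in>ball p r. 0 \<le> pre N a j1 x \<longrightarrow> pre N b j2 x = gp \<bullet> (x - p)"
    and z2m: "\<forall>x\<in>ball p r. pre N a j1 x \<le> 0 \<longrightarrow> pre N b j2 x = gm \<bullet> (x - p)"
begin

definition hh :: "int \<Rightarrow> real^'n" where "hh u = (if u = 1 then gp else gm)"

lemma z2h: "u = 1 \<or> u = -1 \<Longrightarrow> x \<in> ball p r \<Longrightarrow> 0 \<le> of_int u * pre N a j1 x \<Longrightarrow> pre N b j2 x = hh u \<bullet> (x - p)"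
  using z2p z2m unfolding hh_def by auto

lemma step_ball: "\<exists>\<epsilon>>0. p + \<epsilon> *\<^sub>R v \<in> ball p r"
proof -
  obtain \<epsilon> where "\<epsilon> > 0" "norm (\<epsilon> *\<^sub>R v) < r" using small_step[OF r, of v] by blast
  then show ?thesis by (intro exI[of _ \<epsilon>]) (simp add: dist_norm)
qed

definition X :: "int \<Rightarrow> int \<Rightarrow> (real^'n) set" where
  "X s1 s2 = cellset N (depth N) (t((a,j1) := s1, (b,j2) := s2))"

lemma upd_a: "(t((a,j1) := s1, (b,j2) := s2)) (a,j1) = s1" by (subst fun_upd_other[OF bne]) simp
lemma upd_b: "(t((a,j1) := s1, (b,j2) := s2)) (b,j2) = s2" by simp

lemma tau_X: "\<tau> \<subseteq> X s1 s2"
proof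
  fix y assume y: "y \<in> \<tau>"
  show "y \<in> X s1 s2" unfolding X_def cellset_def
  proof (intro CollectI ballI allI impI)
    fix l j assume l: "l \<in> {1..depth N}" and j: "j < width N l"
    show "sgn_cond ((t((a,j1) := s1, (b,j2) := s2)) (l,j)) (pre N l j y)"
    proof (cases "(l,j) = (b,j2)")
      case True
      then show ?thesis using zero_tau[OF beta_b(1,2) zb_p y] sgn_cond_0 by auto
    next
      case False
      show ?thesis
      proof (cases "(l,j) = (a,j1)")
        case True
        then show ?thesis using zero_tau[OF beta_a(1,2) za_p y] sgn_cond_0 by auto
      next
        case False2: False
        have "(t((a,j1) := s1, (b,j2) := s2)) (l,j) = t (l,j)"
          by (subst fun_upd_other[OF False]) (subst fun_upd_other[OF False2], rule refl)
        then show ?thesis using tau_cond[OF y l j] by simp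
      qed
    qed
  qed
qed

lemma p_X: "p \<in> X s1 s2" using tau_X pin by blast

lemma germX: "x \<in> ball p r \<Longrightarrow> x \<in> X s1 s2 \<longleftrightarrow> sgn_cond s1 (pre N a j1 x) \<and> sgn_cond s2 (pre N b j2 x)"
  using germ[OF p_X[unfolded X_def]] upd_a upd_b unfolding X_def by simp

lemma X_canon: "X s1 s2 \<in> canonical N"
  unfolding canonical_def cells_char X_def using p_X[unfolded X_def] by auto

lemma X_conv: "convex (X s1 s2)" unfolding X_def by (rule convex_cellset)

lemma X_aff: "\<exists>A c. \<forall>x\<in>X s1 s2. \<forall>k<nout N. netf N x k = A k \<bullet> x + c k"
  unfolding X_def by (rule G3)

lemma meet_a: "X 1 u \<inter> X (-1) u = X 0 u"
proof -
  have "X 1 u \<inter> X (-1) u = cellset N (depth N) ((t((a,j1) := 1, (b,j2) := u))((a,j1) := 0))"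
    unfolding X_def by (rule cellset_meet) (use bne in auto)
  also have "(t((a,j1) := 1, (b,j2) := u))((a,j1) := 0) = t((a,j1) := 0, (b,j2) := u)"
    using bne by (auto simp: fun_eq_iff)
  finally show ?thesis unfolding X_def .
qed

lemma meet_b: "X u 1 \<inter> X u (-1) = X u 0"
proof -
  have "X u 1 \<inter> X u (-1) = cellset N (depth N) ((t((a,j1) := u, (b,j2) := 1))((b,j2) := 0))"
    unfolding X_def by (rule cellset_meet) (use bne in auto)
  also have "(t((a,j1) := u, (b,j2) := 1))((b,j2) := 0) = t((a,j1) := u, (b,j2) := 0)"
    by (auto simp: fun_eq_iff)
  finally show ?thesis unfolding X_def .
qed

lemma sub_a: "v = 1 \<or> v = -1 \<Longrightarrow> X 0 u \<subseteq> X v u" using meet_a[of u] by auto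
lemma sub_b: "v = 1 \<or> v = -1 \<Longrightarrow> X u 0 \<subseteq> X u v" using meet_b[of u] by auto

lemma Z_sub:
  assumes "h = gp \<or> h = gm"
  shows "ball p r \<inter> {x. g1 \<bullet> (x - p) = 0 \<and> h \<bullet> (x - p) = 0} \<subseteq> \<tau>"
proof
  fix x assume x: "x \<in> ball p r \<inter> {x. g1 \<bullet> (x - p) = 0 \<and> h \<bullet> (x - p) = 0}"
  then have xb: "x \<in> ball p r" and z1x: "pre N a j1 x = 0" using z1 by auto
  have "pre N b j2 x = 0"
  proof (cases "h = gp")
    case True
    then show ?thesis using x z2p z1x by auto
  next
    case False
    then have "h = gm" using assms by blast
    then show ?thesis using x z2m z1x by auto
  qed
  then show "x \<in> \<tau>" using germ[OF pin[unfolded tau] xb] z1x sgn_cond_0 tau by simp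
qed

lemma Dh: assumes "h = gp \<or> h = gm" shows "(g1 \<bullet> g1) * (h \<bullet> h) \<noteq> (g1 \<bullet> h)^2"
proof
  assume D: "(g1 \<bullet> g1) * (h \<bullet> h) = (g1 \<bullet> h)^2"
  have "int CARD('n) - 1 \<le> aff_dim (ball p r \<inter> {x. g1 \<bullet> (x - p) = 0 \<and> h \<bullet> (x - p) = 0})"
    by (rule nondeg[OF r D])
  also have "\<dots> \<le> aff_dim \<tau>" by (rule aff_dim_subset[OF Z_sub[OF assms]])
  finally show False using dim by simp
qed

lemma hh_cases: "hh u = gp \<or> hh u = gm" unfolding hh_def by auto

lemma surjh: "\<exists>v. g1 \<bullet> v = \<alpha> \<and> hh u \<bullet> v = \<beta>"
  by (rule indep_surj[OF Dh[OF hh_cases]])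

lemma g1_nz: "g1 \<noteq> 0" using Dh[of gp] by auto
lemma hh_nz: "hh u \<noteq> 0" using Dh[OF hh_cases[of u]] by auto

lemma wit:
  assumes u: "u = 1 \<or> u = -1" and al: "0 \<le> of_int u * \<alpha>"
  shows "\<exists>\<epsilon>>0. \<exists>x\<in>ball p r. pre N a j1 x = \<epsilon> * \<alpha> \<and> pre N b j2 x = \<epsilon> * \<beta> \<and> hh u \<bullet> (x - p) = \<epsilon> * \<beta>"
proof -
  obtain v where v: "g1 \<bullet> v = \<alpha>" "hh u \<bullet> v = \<beta>" using surjh by blast
  obtain \<epsilon> where e: "\<epsilon> > 0" "p + \<epsilon> *\<^sub>R v \<in> ball p r" using step_ball by blast
  define x where "x = p + \<epsilon> *\<^sub>R v"
  have xp: "x - p = \<epsilon> *\<^sub>R v" unfolding x_def by simp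
  have zx: "pre N a j1 x = \<epsilon> * \<alpha>" using z1 e v unfolding x_def by simp
  have "0 \<le> of_int u * pre N a j1 x" using zx al e(1) by (simp add: mult.left_commute)
  then have "pre N b j2 x = hh u \<bullet> (x - p)" using z2h[OF u] e(2) unfolding x_def by simp
  then have A: "pre N b j2 x = \<epsilon> * \<beta>" using xp v by simp
  have B: "hh u \<bullet> (x - p) = \<epsilon> * \<beta>" using xp v by simp
  have xb: "x \<in> ball p r" using e(2) unfolding x_def .
  show ?thesis by (intro exI[of _ \<epsilon>] conjI bexI[of _ x]) (use e(1) xb zx A B in auto)
qed

lemma aff_tau:
  assumes "h = g1 \<or> h = gp"
  shows "affine hull \<tau> \<subseteq> {x. h \<bullet> x = h \<bullet> p}"
proof -
  have eq: "affine hull (\<tau> \<inter> ball p r) = affine hull \<tau>"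
    by (rule affine_hull_convex_Int_open) (use conv_tau pin r in auto)
  moreover have sub: "\<tau> \<inter> ball p r \<subseteq> {x. h \<bullet> x = h \<bullet> p}"
  proof
    fix y assume y: "y \<in> \<tau> \<inter> ball p r"
    have za: "pre N a j1 y = 0" using zero_tau[OF beta_a(1,2) za_p] y by blast
    have zb: "pre N b j2 y = 0" using zero_tau[OF beta_b(1,2) zb_p] y by blast
    have yb: "y \<in> ball p r" using y by blast
    show "y \<in> {x. h \<bullet> x = h \<bullet> p}"
    proof (cases "h = g1")
      case True
      then have "h \<bullet> (y - p) = 0" using z1 yb za by simp
      then show ?thesis by (simp add: inner_diff_right)
    next
      case False
      then have hp: "h = gp" using assms by blast
      have "pre N b j2 y = gp \<bullet> (y - p)" using z2p yb za by simp
      then have "h \<bullet> (y - p) = 0" using zb hp by simp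
      then show ?thesis by (simp add: inner_diff_right)
    qed
  qed
  have "affine hull (\<tau> \<inter> ball p r) \<subseteq> {x. h \<bullet> x = h \<bullet> p}"
    by (rule hull_minimal[where S=affine, OF sub affine_hyperplane])
  then show ?thesis using eq by simp
qed


lemma aff_dim_Xgerm: "aff_dim (X s1 s2) = aff_dim (X s1 s2 \<inter> ball p r)"
  by (rule aff_dim_germ[OF X_conv p_X r])

lemma u_cases: "u = 1 \<or> u = (-1::int) \<Longrightarrow> of_int u * of_int u = (1::real)"
  by auto

lemma dimF0:
  assumes u: "u = 1 \<or> u = -1"
  shows "aff_dim (X 0 u) = int CARD('n) - 1"
proof (rule antisym)
  have "X 0 u \<inter> ball p r \<subseteq> {x. g1 \<bullet> x = g1 \<bullet> p}"
  proof
    fix x assume x: "x \<in> X 0 u \<inter> ball p r"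
    then have "pre N a j1 x = 0" using germX sgn_cond_zero by blast
    then show "x \<in> {x. g1 \<bullet> x = g1 \<bullet> p}" using z1 x by (auto simp: inner_diff_right)
  qed
  then have "aff_dim (X 0 u \<inter> ball p r) \<le> aff_dim {x. g1 \<bullet> x = g1 \<bullet> p}" by (rule aff_dim_subset)
  also have "\<dots> = int CARD('n) - 1" using aff_dim_hyperplane[OF g1_nz] card_n_pos[where 'n='n] by (simp add: of_nat_diff)
  finally show "aff_dim (X 0 u) \<le> int CARD('n) - 1" using aff_dim_Xgerm by simp
next
  obtain \<epsilon> x where e: "\<epsilon> > 0" and x: "x \<in> ball p r" "pre N a j1 x = \<epsilon> * 0"
    "pre N b j2 x = \<epsilon> * of_int u" "hh 1 \<bullet> (x - p) = \<epsilon> * of_int u"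
    using wit[of 1 0 "of_int u"] by auto
  have "sgn_cond u (pre N b j2 x)" using x(3) e u by (auto simp: sgn_cond_def)
  then have xX: "x \<in> X 0 u" using germX[OF x(1)] x(2) sgn_cond_0 by simp
  have "gp \<bullet> (x - p) \<noteq> 0" using x(4) e u unfolding hh_def by auto
  then have "x \<notin> affine hull \<tau>" using aff_tau[of gp] by (auto simp: inner_diff_right)
  then have "aff_dim (insert x \<tau>) = aff_dim \<tau> + 1" by (simp add: aff_dim_insert)
  moreover have "aff_dim (insert x \<tau>) \<le> aff_dim (X 0 u)" using xX tau_X by (intro aff_dim_subset) auto
  ultimately show "int CARD('n) - 1 \<le> aff_dim (X 0 u)" using dim by simp
qed

lemma dimF1:
  assumes u: "u = 1 \<or> u = -1"
  shows "aff_dim (X u 0) = int CARD('n) - 1"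
proof (rule antisym)
  have "X u 0 \<inter> ball p r \<subseteq> {x. hh u \<bullet> x = hh u \<bullet> p}"
  proof
    fix x assume x: "x \<in> X u 0 \<inter> ball p r"
    then have c: "sgn_cond u (pre N a j1 x)" "pre N b j2 x = 0" using germX sgn_cond_zero by blast+
    have "pre N b j2 x = hh u \<bullet> (x - p)" using z2h[OF u] x c(1) sgn_cond_u[OF u] by blast
    then show "x \<in> {x. hh u \<bullet> x = hh u \<bullet> p}" using c(2) by (auto simp: inner_diff_right)
  qed
  then have "aff_dim (X u 0 \<inter> ball p r) \<le> aff_dim {x. hh u \<bullet> x = hh u \<bullet> p}" by (rule aff_dim_subset)
  also have "\<dots> = int CARD('n) - 1" using aff_dim_hyperplane[OF hh_nz] card_n_pos[where 'n='n] by (simp add: of_nat_diff)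
  finally show "aff_dim (X u 0) \<le> int CARD('n) - 1" using aff_dim_Xgerm by simp
next
  obtain \<epsilon> x where e: "\<epsilon> > 0" and x: "x \<in> ball p r" "pre N a j1 x = \<epsilon> * of_int u"
    "pre N b j2 x = \<epsilon> * 0"
    using wit[OF u, of "of_int u" 0] u_cases[OF u] by auto
  have "sgn_cond u (pre N a j1 x)" using x(2) e u by (auto simp: sgn_cond_def)
  then have xX: "x \<in> X u 0" using germX[OF x(1)] x(3) sgn_cond_0 by simp
  have "g1 \<bullet> (x - p) \<noteq> 0" using x(2) z1 x(1) e u by auto
  then have "x \<notin> affine hull \<tau>" using aff_tau[of g1] by (auto simp: inner_diff_right)
  then have "aff_dim (insert x \<tau>) = aff_dim \<tau> + 1" by (simp add: aff_dim_insert)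
  moreover have "aff_dim (insert x \<tau>) \<le> aff_dim (X u 0)" using xX tau_X by (intro aff_dim_subset) auto
  ultimately show "int CARD('n) - 1 \<le> aff_dim (X u 0)" using dim by simp
qed

lemma chamber_pt:
  assumes u1: "u1 = 1 \<or> u1 = -1" and u2: "u2 = 1 \<or> u2 = -1"
  shows "\<exists>x\<in>ball p r. 0 < of_int u1 * pre N a j1 x \<and> 0 < of_int u2 * pre N b j2 x"
proof -
  obtain \<epsilon> x where e: "\<epsilon> > 0" and x: "x \<in> ball p r" "pre N a j1 x = \<epsilon> * of_int u1"
    "pre N b j2 x = \<epsilon> * of_int u2"
    using wit[OF u1, of "of_int u1" "of_int u2"] u_cases[OF u1] by auto
  have "0 < of_int u1 * pre N a j1 x" "0 < of_int u2 * pre N b j2 x"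
    using x e u_cases[OF u1] u_cases[OF u2] by (simp_all add: mult.left_commute)
  then show ?thesis using x(1) by blast
qed

lemma int_X:
  assumes u1: "u1 = 1 \<or> u1 = -1" and u2: "u2 = 1 \<or> u2 = -1"
  shows "interior (X u1 u2) \<noteq> {}"
proof -
  define O' where "O' = ball p r \<inter> {x. 0 < of_int u1 * pre N a j1 x} \<inter> {x. 0 < of_int u2 * pre N b j2 x}"
  have "open O'" unfolding O'_def
    by (intro open_Int open_ball open_Collect_less continuous_intros pre_cont continuous_on_mult_left)
  moreover have "O' \<subseteq> X u1 u2"
  proof
    fix x assume "x \<in> O'"
    then show "x \<in> X u1 u2" unfolding O'_def using germX sgn_cond_u[OF u1] sgn_cond_u[OF u2] by auto
  qed
  ultimately have "O' \<subseteq> interior (X u1 u2)" by (rule interior_maximal[rotated])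
  moreover have "O' \<noteq> {}" using chamber_pt[OF u1 u2] unfolding O'_def by auto
  ultimately show ?thesis by blast
qed

lemma dimCh: "u1 = 1 \<or> u1 = -1 \<Longrightarrow> u2 = 1 \<or> u2 = -1 \<Longrightarrow> aff_dim (X u1 u2) = int CARD('n)"
  using aff_dim_nonempty_interior[OF int_X] by simp

lemma ch_ne_a: "u = 1 \<or> u = -1 \<Longrightarrow> X 1 u \<noteq> X (-1) u"
proof
  assume u: "u = 1 \<or> u = -1" and eq: "X 1 u = X (-1) u"
  obtain x where x: "x \<in> ball p r" "0 < of_int 1 * pre N a j1 x" "0 < of_int u * pre N b j2 x"
    using chamber_pt[OF _ u, of 1] by auto
  have "x \<in> X 1 u" using germX[OF x(1)] x u sgn_cond_u[OF u] by (simp add: sgn_cond_def)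
  then have "x \<in> X (-1) u" using eq by simp
  then show False using germX[OF x(1)] x(2) by (simp add: sgn_cond_def)
qed

lemma ch_ne_b: "u = 1 \<or> u = -1 \<Longrightarrow> X u 1 \<noteq> X u (-1)"
proof
  assume u: "u = 1 \<or> u = -1" and eq: "X u 1 = X u (-1)"
  obtain x where x: "x \<in> ball p r" "0 < of_int u * pre N a j1 x" "0 < of_int 1 * pre N b j2 x"
    using chamber_pt[OF u, of 1] by auto
  have "x \<in> X u 1" using germX[OF x(1)] x u sgn_cond_u[OF u] by (simp add: sgn_cond_def)
  then have "x \<in> X u (-1)" using eq by simp
  then show False using germX[OF x(1)] x(3) by (simp add: sgn_cond_def)
qed


lemma fw0:
  assumes u: "u = 1 \<or> u = -1"
  shows "\<exists>x\<in>ball p r. pre N a j1 x = 0 \<and> 0 < of_int u * pre N b j2 x"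
proof -
  obtain \<epsilon> x where e: "\<epsilon> > 0" and x: "x \<in> ball p r" "pre N a j1 x = \<epsilon> * 0"
    "pre N b j2 x = \<epsilon> * of_int u"
    using wit[of 1 0 "of_int u"] by auto
  then show ?thesis using u_cases[OF u] by (intro bexI[of _ x]) (auto simp: mult.left_commute)
qed

lemma fw1:
  assumes u: "u = 1 \<or> u = -1"
  shows "\<exists>x\<in>ball p r. 0 < of_int u * pre N a j1 x \<and> pre N b j2 x = 0"
proof -
  obtain \<epsilon> x where e: "\<epsilon> > 0" and x: "x \<in> ball p r" "pre N a j1 x = \<epsilon> * of_int u"
    "pre N b j2 x = \<epsilon> * 0"
    using wit[OF u, of "of_int u" 0] u_cases[OF u] by auto
  then show ?thesis using u_cases[OF u] by (intro bexI[of _ x]) (auto simp: mult.left_commute)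
qed

lemma F0_ne_F1: "u = 1 \<or> u = -1 \<Longrightarrow> X 0 u \<noteq> X v 0"
proof
  assume u: "u = 1 \<or> u = -1" and eq: "X 0 u = X v 0"
  obtain x where x: "x \<in> ball p r" "pre N a j1 x = 0" "0 < of_int u * pre N b j2 x" using fw0[OF u] by blast
  have "x \<in> X 0 u" using germX[OF x(1)] x sgn_cond_u[OF u] sgn_cond_0 by simp
  then have "x \<in> X v 0" using eq by simp
  then have "pre N b j2 x = 0" using germX[OF x(1)] sgn_cond_zero by simp
  then show False using x(3) by simp
qed

lemma F0_ne: "X 0 1 \<noteq> X 0 (-1)"
proof
  assume eq: "X 0 1 = X 0 (-1)"
  obtain x where x: "x \<in> ball p r" "pre N a j1 x = 0" "0 < of_int 1 * pre N b j2 x" using fw0[of 1] by blast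
  have "x \<in> X 0 1" using germX[OF x(1)] x sgn_cond_0 by (simp add: sgn_cond_def)
  then have "x \<in> X 0 (-1)" using eq by simp
  then show False using germX[OF x(1)] x(3) by (simp add: sgn_cond_def)
qed

lemma F1_ne: "X 1 0 \<noteq> X (-1) 0"
proof
  assume eq: "X 1 0 = X (-1) 0"
  obtain x where x: "x \<in> ball p r" "0 < of_int 1 * pre N a j1 x" "pre N b j2 x = 0" using fw1[of 1] by blast
  have "x \<in> X 1 0" using germX[OF x(1)] x sgn_cond_0 by (simp add: sgn_cond_def)
  then have "x \<in> X (-1) 0" using eq by simp
  then show False using germX[OF x(1)] x(2) by (simp add: sgn_cond_def)
qed

lemma X00_sub: "X 0 0 \<inter> ball p r \<subseteq> \<tau>"
proof
  fix x assume x: "x \<in> X 0 0 \<inter> ball p r"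
  then have "pre N a j1 x = 0" "pre N b j2 x = 0" using germX sgn_cond_zero by blast+
  then show "x \<in> \<tau>" using germ[OF pin[unfolded tau]] x sgn_cond_0 tau by simp
qed

lemma sgn_int_cases: "sgn (i::int) = 1 \<or> sgn i = 0 \<or> sgn i = -1"
  by (simp add: sgn_if)

lemma uniq:
  assumes P: "P \<in> canonical N" "aff_dim P = int CARD('n) - 1" "\<tau> \<subseteq> P"
  shows "P = X 0 1 \<or> P = X 0 (-1) \<or> P = X 1 0 \<or> P = X (-1) 0"
proof -
  obtain s where s: "P = cellset N (depth N) s" using P(1) unfolding canonical_def cells_char by auto
  have pP: "p \<in> cellset N (depth N) s" using P(3) pin s by blast
  define \<sigma>1 where "\<sigma>1 = sgn (s (a,j1))"
  define \<sigma>2 where "\<sigma>2 = sgn (s (b,j2))"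
  have g: "\<forall>x\<in>ball p r. x \<in> cellset N (depth N) s \<longleftrightarrow> x \<in> X \<sigma>1 \<sigma>2"
    using germ[OF pP] germX unfolding \<sigma>1_def \<sigma>2_def by (simp add: sgn_cond_sgn)
  have "cellset N (depth N) s \<subseteq> X \<sigma>1 \<sigma>2" unfolding X_def
    by (rule same_germ[OF pP r]) (use g in \<open>simp add: X_def\<close>)
  moreover have "X \<sigma>1 \<sigma>2 \<subseteq> cellset N (depth N) s" unfolding X_def
    by (rule same_germ[OF p_X[unfolded X_def] r]) (use g in \<open>simp add: X_def\<close>)
  ultimately have PX: "P = X \<sigma>1 \<sigma>2" using s by blast
  have c1: "\<sigma>1 = 1 \<or> \<sigma>1 = 0 \<or> \<sigma>1 = -1" and c2: "\<sigma>2 = 1 \<or> \<sigma>2 = 0 \<or> \<sigma>2 = -1"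
    unfolding \<sigma>1_def \<sigma>2_def by (rule sgn_int_cases)+
  have nch: "\<not> (\<sigma>1 \<noteq> 0 \<and> \<sigma>2 \<noteq> 0)"
  proof
    assume "\<sigma>1 \<noteq> 0 \<and> \<sigma>2 \<noteq> 0"
    then have "aff_dim P = int CARD('n)" using PX dimCh c1 c2 by auto
    then show False using P(2) by simp
  qed
  have n00: "\<not> (\<sigma>1 = 0 \<and> \<sigma>2 = 0)"
  proof
    assume "\<sigma>1 = 0 \<and> \<sigma>2 = 0"
    then have "aff_dim P = aff_dim (X 0 0 \<inter> ball p r)" using PX aff_dim_Xgerm by simp
    also have "\<dots> \<le> aff_dim \<tau>" by (rule aff_dim_subset[OF X00_sub])
    finally show False using P(2) dim by simp
  qed
  show ?thesis using PX c1 c2 nch n00 by auto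
qed

definition flat :: "(real^'n) set \<Rightarrow> bool" where
  "flat C \<longleftrightarrow> (\<forall>x\<in>C. \<forall>k<nout N. netf N x k = netf N p k)"

lemma facet_flat:
  assumes C: "C \<in> canonical N" "convex C" "p \<in> C" "interior C \<noteq> {}" "aff_dim C = int CARD('n)"
      "\<exists>A c. \<forall>x\<in>C. \<forall>k<nout N. netf N x k = A k \<bullet> x + c k"
    and C': "C' \<in> canonical N" "convex C'" "p \<in> C'" "interior C' \<noteq> {}" "aff_dim C' = int CARD('n)"
      "\<exists>A c. \<forall>x\<in>C'. \<forall>k<nout N. netf N x k = A k \<bullet> x + c k"
    and \<sigma>: "\<sigma> \<in> canonical N" "aff_dim \<sigma> = int CARD('n) - 1" "\<sigma> = C \<inter> C'" "C \<noteq> C'"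
      "\<not> \<sigma> \<subseteq> {x. breakpoint N x}"
  shows "flat C \<and> flat C'"
proof -
  obtain A c where ac: "\<forall>x\<in>C. \<forall>k<nout N. netf N x k = A k \<bullet> x + c k" using C(6) by blast
  obtain A' c' where ac': "\<forall>x\<in>C'. \<forall>k<nout N. netf N x k = A' k \<bullet> x + c' k" using C'(6) by blast
  obtain x0 where x0: "x0 \<in> \<sigma>" "\<not> breakpoint N x0" using \<sigma>(5) by blast
  then obtain U where U: "open U" "x0 \<in> U" "affine_on_net N U" unfolding breakpoint_def by blast
  then obtain B d where bd: "\<forall>y\<in>U. \<forall>k<nout N. netf N y k = B k \<bullet> y + d k" unfolding affine_on_net_def by blast
  have x0C: "x0 \<in> C" "x0 \<in> C'" using x0 \<sigma>(3) by auto
  have AB: "A k = B k" if k: "k < nout N" for k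
  proof (rule G2[of "U \<inter> interior C"])
    show "U \<inter> interior C \<noteq> {}" using G1[OF C(2) C(4) x0C(1) U(1) U(2)] by blast
    show "\<forall>x\<in>U \<inter> interior C. A k \<bullet> x + c k = B k \<bullet> x + d k"
    proof
      fix x assume x: "x \<in> U \<inter> interior C"
      then have "x \<in> C" using interior_subset by blast
      then show "A k \<bullet> x + c k = B k \<bullet> x + d k" using ac bd x k by (metis IntD1)
    qed
  qed (use U in auto)
  have AB': "A' k = B k" if k: "k < nout N" for k
  proof (rule G2[of "U \<inter> interior C'"])
    show "U \<inter> interior C' \<noteq> {}" using G1[OF C'(2) C'(4) x0C(2) U(1) U(2)] by blast
    show "\<forall>x\<in>U \<inter> interior C'. A' k \<bullet> x + c' k = B k \<bullet> x + d k"
    proof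
      fix x assume x: "x \<in> U \<inter> interior C'"
      then have "x \<in> C'" using interior_subset by blast
      then show "A' k \<bullet> x + c' k = B k \<bullet> x + d k" using ac' bd x k by (metis IntD1)
    qed
  qed (use U in auto)
  have tw: "trop_weight N C C' \<sigma> = (\<lambda>_. 0)"
  proof
    fix k
    show "trop_weight N C C' \<sigma> k = 0"
    proof (cases "k < nout N")
      case True
      have "lin_part N C k = A k" by (rule G5[OF C(4) ac True])
      moreover have "lin_part N C' k = A' k" by (rule G5[OF C'(4) ac' True])
      ultimately show ?thesis unfolding trop_weight_def using AB[OF True] AB'[OF True] True by simp
    next
      case False
      then show ?thesis unfolding trop_weight_def by simp
    qed
  qed
  have H: "trop_weight N C C' \<sigma> = (\<lambda>_. 0) \<longleftrightarrow>
        (\<exists>k\<in>{1..depth N}. \<forall>j<width N k. \<forall>x\<in>rel_interior \<sigma>. pre N k j x < 0)"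
  proof -
    have "\<forall>\<sigma> P Q. \<sigma> \<in> canonical N \<and> aff_dim \<sigma> = int CARD('n) - 1 \<and>
     P \<in> canonical N \<and> Q \<in> canonical N \<and> aff_dim P = int CARD('n) \<and> aff_dim Q = int CARD('n) \<and>
     P \<noteq> Q \<and> \<sigma> = P \<inter> Q \<longrightarrow>
       (trop_weight N P Q \<sigma> = (\<lambda>_. 0) \<longleftrightarrow>
        (\<exists>k\<in>{1..depth N}. \<forall>j<width N k. \<forall>x\<in>rel_interior \<sigma>. pre N k j x < 0))"
      using cf unfolding cancellation_free_def .
    note h = spec[of _ C', OF spec[of _ C, OF spec[of _ \<sigma>, OF this]]]
    show ?thesis by (rule mp[OF h]) (use \<sigma>(1-4) C(1,5) C'(1,5) in blast)
  qed
  obtain k where k: "k \<in> {1..depth N}" "\<forall>j<width N k. \<forall>x\<in>rel_interior \<sigma>. pre N k j x < 0"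
    using H tw by blast
  have "convex \<sigma>" using \<sigma>(3) C(2) C'(2) by (simp add: convex_Int)
  moreover have "\<sigma> \<noteq> {}" using \<sigma>(3) C(3) C'(3) by blast
  ultimately obtain y where y: "y \<in> rel_interior \<sigma>" using rel_interior_eq_empty by blast
  have yC: "y \<in> C" "y \<in> C'" using y rel_interior_subset \<sigma>(3) by blast+
  obtain e where e: "e > 0" "\<forall>x\<in>ball y e. \<forall>m. netf N x m = netf N y m"
    using G4[OF k(1)] k(2) y by blast
  show ?thesis unfolding flat_def
    using flat_from_dead[OF C(2,4,3) yC(1) ac e] flat_from_dead[OF C'(2,4,3) yC(2) ac' e] by blast
qed


lemma u_real: "u = 1 \<or> u = (-1::int) \<Longrightarrow> of_int u = (1::real) \<or> of_int u = (-1::real)"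
  by auto

lemma W_flat:
  assumes u1: "u1 = 1 \<or> u1 = -1" and u2: "u2 = 1 \<or> u2 = -1"
    and f0: "flat (X 0 u2)" and f1: "flat (X u1 0)"
  shows "flat (X u1 u2)"
proof -
  obtain A c where ac: "\<forall>x\<in>X u1 u2. \<forall>k<nout N. netf N x k = A k \<bullet> x + c k" using X_aff by blast
  have A0: "A k = 0" if k: "k < nout N" for k
  proof -
    have key: "A k \<bullet> v = 0" if "x \<in> X u1 u2" "netf N x k = netf N p k" "x = p + \<epsilon> *\<^sub>R v" "\<epsilon> > 0" for x v \<epsilon>
    proof -
      have "netf N x k = A k \<bullet> x + c k" using ac that(1) k by blast
      moreover have "netf N p k = A k \<bullet> p + c k" using ac p_X k by blast
      ultimately have "A k \<bullet> x + c k = A k \<bullet> p + c k" using that(2) by simp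
      then have "\<epsilon> * (A k \<bullet> v) = 0" using that(3) by (simp add: inner_add_right)
      then show ?thesis using that(4) by simp
    qed
    show ?thesis
    proof (rule LA[OF u_real[OF u1] u_real[OF u2] surjh])
      fix v assume v: "g1 \<bullet> v = 0" "0 \<le> of_int u2 * (hh u1 \<bullet> v)"
      obtain \<epsilon> where e: "\<epsilon> > 0" "p + \<epsilon> *\<^sub>R v \<in> ball p r" using step_ball by blast
      define x where "x = p + \<epsilon> *\<^sub>R v"
      have xb: "x \<in> ball p r" using e unfolding x_def by simp
      have za: "pre N a j1 x = 0" using z1 xb v unfolding x_def by simp
      have "pre N b j2 x = hh u1 \<bullet> (x - p)" using z2h[OF u1 xb] za by simp
      then have zb: "pre N b j2 x = \<epsilon> * (hh u1 \<bullet> v)" unfolding x_def by simp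
      have "0 \<le> of_int u2 * pre N b j2 x" using zb v(2) e(1) by (simp add: mult.left_commute)
      then have "x \<in> X 0 u2" using germX[OF xb] za sgn_cond_0 sgn_cond_u[OF u2] by simp
      then have "x \<in> X u1 u2" "netf N x k = netf N p k" using sub_a[OF u1] f0 k unfolding flat_def by auto
      then show "A k \<bullet> v = 0" using key x_def e(1) by blast
    next
      fix v assume v: "0 \<le> of_int u1 * (g1 \<bullet> v)" "hh u1 \<bullet> v = 0"
      obtain \<epsilon> where e: "\<epsilon> > 0" "p + \<epsilon> *\<^sub>R v \<in> ball p r" using step_ball by blast
      define x where "x = p + \<epsilon> *\<^sub>R v"
      have xb: "x \<in> ball p r" using e unfolding x_def by simp
      have za: "pre N a j1 x = \<epsilon> * (g1 \<bullet> v)" using z1 xb unfolding x_def by simp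
      have za': "0 \<le> of_int u1 * pre N a j1 x" using za v(1) e(1) by (simp add: mult.left_commute)
      have "pre N b j2 x = hh u1 \<bullet> (x - p)" using z2h[OF u1 xb za'] .
      then have zb: "pre N b j2 x = 0" using v(2) unfolding x_def by simp
      have "x \<in> X u1 0" using germX[OF xb] za' zb sgn_cond_0 sgn_cond_u[OF u1] by simp
      then have "x \<in> X u1 u2" "netf N x k = netf N p k" using sub_b[OF u2] f1 k unfolding flat_def by auto
      then show "A k \<bullet> v = 0" using key x_def e(1) by blast
    qed
  qed
  show ?thesis unfolding flat_def
  proof (intro ballI allI impI)
    fix x k assume x: "x \<in> X u1 u2" and k: "k < nout N"
    have "netf N x k = c k" "netf N p k = c k" using ac x p_X k A0[OF k] by auto
    then show "netf N x k = netf N p k" by simp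
  qed
qed

lemma flat_sub: "flat C \<Longrightarrow> D \<subseteq> C \<Longrightarrow> flat D"
  unfolding flat_def by blast

lemma all_flat_False:
  assumes "flat (X 1 1)" "flat (X 1 (-1))" "flat (X (-1) 1)" "flat (X (-1) (-1))"
  shows False
proof -
  have "breakpoint N p" using tau_bp pin by blast
  moreover have "\<forall>x\<in>ball p r. \<forall>k<nout N. netf N x k = (\<lambda>_::nat. 0::real^'n) k \<bullet> x + (\<lambda>k. netf N p k) k"
  proof (intro ballI allI impI)
    fix x k assume x: "x \<in> ball p r" and k: "k < nout N"
    define u1 where "u1 = (if 0 \<le> pre N a j1 x then 1 else (-1::int))"
    define u2 where "u2 = (if 0 \<le> pre N b j2 x then 1 else (-1::int))"
    have "x \<in> X u1 u2" using germX[OF x] unfolding u1_def u2_def sgn_cond_def by auto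
    moreover have "flat (X u1 u2)" using assms unfolding u1_def u2_def by auto
    ultimately show "netf N x k = (\<lambda>_::nat. 0::real^'n) k \<bullet> x + (\<lambda>k. netf N p k) k" using k unfolding flat_def by simp
  qed
  then have "affine_on_net N (ball p r)" unfolding affine_on_net_def
    by (intro exI[of _ "\<lambda>_. 0"] exI[of _ "\<lambda>k. netf N p k"]) simp
  ultimately show False unfolding breakpoint_def using r by auto
qed

lemma nb0:
  assumes u: "u = 1 \<or> u = -1" and nb: "\<not> X 0 u \<subseteq> {x. breakpoint N x}"
  shows "flat (X 1 u) \<and> flat (X (-1) u)"
  by (rule facet_flat[OF X_canon X_conv p_X int_X dimCh X_aff X_canon X_conv p_X int_X dimCh X_aff
      X_canon dimF0[OF u] meet_a[symmetric] ch_ne_a[OF u] nb]) (use u in auto)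

lemma nb1:
  assumes u: "u = 1 \<or> u = -1" and nb: "\<not> X u 0 \<subseteq> {x. breakpoint N x}"
  shows "flat (X u 1) \<and> flat (X u (-1))"
  by (rule facet_flat[OF X_canon X_conv p_X int_X dimCh X_aff X_canon X_conv p_X int_X dimCh X_aff
      X_canon dimF1[OF u] meet_b[symmetric] ch_ne_b[OF u] nb]) (use u in auto)

lemma count: "card {P \<in> breakpoint_complex N. aff_dim P = int CARD('n) - 1 \<and> \<tau> \<subseteq> P} \<in> {3, 4}"
proof -
  define bp where "bp = {x. breakpoint N x}"
  define A0 where "A0 = X 0 1"
  define B0 where "B0 = X 0 (-1)"
  define C0 where "C0 = X 1 0"
  define D0 where "D0 = X (-1) 0"
  have S: "{P \<in> breakpoint_complex N. aff_dim P = int CARD('n) - 1 \<and> \<tau> \<subseteq> P} = {P \<in> {A0, B0, C0, D0}. P \<subseteq> bp}"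
  proof (intro set_eqI iffI)
    fix P assume P: "P \<in> {P \<in> breakpoint_complex N. aff_dim P = int CARD('n) - 1 \<and> \<tau> \<subseteq> P}"
    then have "P \<in> canonical N" "P \<subseteq> bp" unfolding breakpoint_complex_def bp_def by auto
    moreover have "P \<in> {A0, B0, C0, D0}" using uniq[OF \<open>P \<in> canonical N\<close>] P unfolding A0_def B0_def C0_def D0_def by auto
    ultimately show "P \<in> {P \<in> {A0, B0, C0, D0}. P \<subseteq> bp}" by blast
  next
    fix P assume P: "P \<in> {P \<in> {A0, B0, C0, D0}. P \<subseteq> bp}"
    have "P \<in> canonical N" using P X_canon unfolding A0_def B0_def C0_def D0_def by auto
    moreover have "aff_dim P = int CARD('n) - 1" using P dimF0[of 1] dimF0[of "-1"] dimF1[of 1] dimF1[of "-1"]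
      unfolding A0_def B0_def C0_def D0_def by auto
    moreover have "\<tau> \<subseteq> P" using P tau_X unfolding A0_def B0_def C0_def D0_def by auto
    ultimately show "P \<in> {P \<in> breakpoint_complex N. aff_dim P = int CARD('n) - 1 \<and> \<tau> \<subseteq> P}"
      using P unfolding breakpoint_complex_def bp_def by auto
  qed
  have dAB: "A0 \<noteq> B0" unfolding A0_def B0_def by (rule F0_ne)
  have dAC: "A0 \<noteq> C0" unfolding A0_def C0_def by (rule F0_ne_F1) simp
  have dAD: "A0 \<noteq> D0" unfolding A0_def D0_def by (rule F0_ne_F1) simp
  have dBC: "B0 \<noteq> C0" unfolding B0_def C0_def by (rule F0_ne_F1) simp
  have dBD: "B0 \<noteq> D0" unfolding B0_def D0_def by (rule F0_ne_F1) simp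
  have dCD: "C0 \<noteq> D0" unfolding C0_def D0_def by (rule F1_ne)
  have iA: "\<not> A0 \<subseteq> bp \<Longrightarrow> flat (X 1 1) \<and> flat (X (-1) 1)" unfolding A0_def bp_def using nb0[of 1] by simp
  have iB: "\<not> B0 \<subseteq> bp \<Longrightarrow> flat (X 1 (-1)) \<and> flat (X (-1) (-1))" unfolding B0_def bp_def using nb0[of "-1"] by simp
  have iC: "\<not> C0 \<subseteq> bp \<Longrightarrow> flat (X 1 1) \<and> flat (X 1 (-1))" unfolding C0_def bp_def using nb1[of 1] by simp
  have iD: "\<not> D0 \<subseteq> bp \<Longrightarrow> flat (X (-1) 1) \<and> flat (X (-1) (-1))" unfolding D0_def bp_def using nb1[of "-1"] by simp
  have w1: "flat (X (-1) 1) \<Longrightarrow> flat (X 1 (-1)) \<Longrightarrow> flat (X 1 1)"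
    by (rule W_flat[of 1 1, OF _ _ flat_sub[OF _ sub_a[of "-1" 1]] flat_sub[OF _ sub_b[of "-1" 1]]]) auto
  have w2: "flat (X (-1) (-1)) \<Longrightarrow> flat (X 1 1) \<Longrightarrow> flat (X 1 (-1))"
    by (rule W_flat[of 1 "-1", OF _ _ flat_sub[OF _ sub_a[of "-1" "-1"]] flat_sub[OF _ sub_b[of 1 1]]]) auto
  have w3: "flat (X 1 1) \<Longrightarrow> flat (X (-1) (-1)) \<Longrightarrow> flat (X (-1) 1)"
    by (rule W_flat[of "-1" 1, OF _ _ flat_sub[OF _ sub_a[of 1 1]] flat_sub[OF _ sub_b[of "-1" "-1"]]]) auto
  have w4: "flat (X 1 (-1)) \<Longrightarrow> flat (X (-1) 1) \<Longrightarrow> flat (X (-1) (-1))"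
    by (rule W_flat[of "-1" "-1", OF _ _ flat_sub[OF _ sub_a[of 1 "-1"]] flat_sub[OF _ sub_b[of 1 "-1"]]]) auto
  have F: "flat (X 1 1) \<Longrightarrow> flat (X 1 (-1)) \<Longrightarrow> flat (X (-1) 1) \<Longrightarrow> flat (X (-1) (-1)) \<Longrightarrow> False"
    using all_flat_False by blast
  have nAB: "\<not> A0 \<subseteq> bp \<Longrightarrow> \<not> B0 \<subseteq> bp \<Longrightarrow> False"
  proof -
    assume "\<not> A0 \<subseteq> bp" "\<not> B0 \<subseteq> bp"
    then have "flat (X 1 1)" "flat (X (-1) 1)" "flat (X 1 (-1))" "flat (X (-1) (-1))" using iA iB by auto
    then show False using F by blast
  qed
  have nCD: "\<not> C0 \<subseteq> bp \<Longrightarrow> \<not> D0 \<subseteq> bp \<Longrightarrow> False"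
  proof -
    assume "\<not> C0 \<subseteq> bp" "\<not> D0 \<subseteq> bp"
    then have "flat (X 1 1)" "flat (X (-1) 1)" "flat (X 1 (-1))" "flat (X (-1) (-1))" using iC iD by auto
    then show False using F by blast
  qed
  have nAC: "\<not> A0 \<subseteq> bp \<Longrightarrow> \<not> C0 \<subseteq> bp \<Longrightarrow> False"
  proof -
    assume "\<not> A0 \<subseteq> bp" "\<not> C0 \<subseteq> bp"
    then have f: "flat (X 1 1)" "flat (X (-1) 1)" "flat (X 1 (-1))" using iA iC by auto
    then have "flat (X (-1) (-1))" using w4 by blast
    then show False using F f by blast
  qed
  have nAD: "\<not> A0 \<subseteq> bp \<Longrightarrow> \<not> D0 \<subseteq> bp \<Longrightarrow> False"
  proof -
    assume "\<not> A0 \<subseteq> bp" "\<not> D0 \<subseteq> bp"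
    then have f: "flat (X 1 1)" "flat (X (-1) 1)" "flat (X (-1) (-1))" using iA iD by auto
    then have "flat (X 1 (-1))" using w2 by blast
    then show False using F f by blast
  qed
  have nBC: "\<not> B0 \<subseteq> bp \<Longrightarrow> \<not> C0 \<subseteq> bp \<Longrightarrow> False"
  proof -
    assume "\<not> B0 \<subseteq> bp" "\<not> C0 \<subseteq> bp"
    then have f: "flat (X 1 (-1))" "flat (X (-1) (-1))" "flat (X 1 1)" using iB iC by auto
    then have "flat (X (-1) 1)" using w3 by blast
    then show False using F f by blast
  qed
  have nBD: "\<not> B0 \<subseteq> bp \<Longrightarrow> \<not> D0 \<subseteq> bp \<Longrightarrow> False"
  proof -
    assume "\<not> B0 \<subseteq> bp" "\<not> D0 \<subseteq> bp"
    then have f: "flat (X 1 (-1))" "flat (X (-1) (-1))" "flat (X (-1) 1)" using iB iD by auto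
    then have "flat (X 1 1)" using w1 by blast
    then show False using F f by blast
  qed
  show ?thesis
  proof (cases "A0 \<subseteq> bp \<and> B0 \<subseteq> bp \<and> C0 \<subseteq> bp \<and> D0 \<subseteq> bp")
    case True
    then have "{P \<in> {A0, B0, C0, D0}. P \<subseteq> bp} = {A0, B0, C0, D0}" by auto
    then show ?thesis unfolding S using dAB dAC dAD dBC dBD dCD by simp
  next
    case False
    then consider "\<not> A0 \<subseteq> bp" | "\<not> B0 \<subseteq> bp" | "\<not> C0 \<subseteq> bp" | "\<not> D0 \<subseteq> bp" by blast
    then show ?thesis
    proof cases
      case 1
      then have "B0 \<subseteq> bp" "C0 \<subseteq> bp" "D0 \<subseteq> bp" using nAB nAC nAD by blast+
      then have "{P \<in> {A0, B0, C0, D0}. P \<subseteq> bp} = {B0, C0, D0}" using 1 by auto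
      then show ?thesis unfolding S using dBC dBD dCD by simp
    next
      case 2
      then have "A0 \<subseteq> bp" "C0 \<subseteq> bp" "D0 \<subseteq> bp" using nAB nBC nBD by blast+
      then have "{P \<in> {A0, B0, C0, D0}. P \<subseteq> bp} = {A0, C0, D0}" using 2 by auto
      then show ?thesis unfolding S using dAC dAD dCD by simp
    next
      case 3
      then have "A0 \<subseteq> bp" "B0 \<subseteq> bp" "D0 \<subseteq> bp" using nAC nBC nCD by blast+
      then have "{P \<in> {A0, B0, C0, D0}. P \<subseteq> bp} = {A0, B0, D0}" using 3 by auto
      then show ?thesis unfolding S using dAB dAD dBD by simp
    next
      case 4
      then have "A0 \<subseteq> bp" "B0 \<subseteq> bp" "C0 \<subseteq> bp" using nAD nBD nCD by blast+
      then have "{P \<in> {A0, B0, C0, D0}. P \<subseteq> bp} = {A0, B0, C0}" using 4 by auto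
      then show ?thesis unfolding S using dAB dAC dBC by simp
    qed
  qed
qed

end



theorem mainTheorem15:
  fixes N :: "'n::finite relu_net" and \<tau> :: "(real^'n) set"
  assumes "valid_net N"
    and "supertransversal N"
    and "cancellation_free N"
    and "\<tau> \<in> breakpoint_complex N"
    and "aff_dim \<tau> = int CARD('n) - 2"
  shows "card {P \<in> breakpoint_complex N. aff_dim P = int CARD('n) - 1 \<and> \<tau> \<subseteq> P} \<in> {3, 4}"
proof -
  have tauC: "\<tau> \<in> canonical N" and tbp: "\<tau> \<subseteq> {x. breakpoint N x}"
    using assms(4) unfolding breakpoint_complex_def by auto
  obtain t where tau: "\<tau> = cellset N (depth N) t" and tne: "\<tau> \<noteq> {}"
    using tauC unfolding canonical_def cells_char by auto
  have "convex \<tau>" using tau convex_cellset by simp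
  then obtain p where p: "p \<in> rel_interior \<tau>" using tne rel_interior_eq_empty by blast
  define NS where "NS = Sigma {1..depth N} (\<lambda>l. {..<width N l})"
  have fin: "finite NS" unfolding NS_def by auto
  have "\<forall>\<^sub>F x in at p. \<forall>lj\<in>NS. (0 < pre N (fst lj) (snd lj) p \<longrightarrow> 0 < pre N (fst lj) (snd lj) x) \<and>
      (pre N (fst lj) (snd lj) p < 0 \<longrightarrow> pre N (fst lj) (snd lj) x < 0)"
  proof (rule eventually_ball_finite[OF fin], intro ballI eventually_conj)
    fix lj :: "nat \<times> nat"
    define f where "f = pre N (fst lj) (snd lj)"
    have tl: "(f \<longlongrightarrow> f p) (at p)" unfolding f_def using pre_isCont isCont_def by blast
    show "\<forall>\<^sub>F x in at p. 0 < pre N (fst lj) (snd lj) p \<longrightarrow> 0 < pre N (fst lj) (snd lj) x"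
    proof (cases "0 < f p")
      case True
      then have "\<forall>\<^sub>F x in at p. 0 < f x" using order_tendstoD(1)[OF tl] by blast
      then show ?thesis unfolding f_def by (rule eventually_mono) simp
    next
      case False
      then show ?thesis unfolding f_def by simp
    qed
    show "\<forall>\<^sub>F x in at p. pre N (fst lj) (snd lj) p < 0 \<longrightarrow> pre N (fst lj) (snd lj) x < 0"
    proof (cases "f p < 0")
      case True
      then have "\<forall>\<^sub>F x in at p. f x < 0" using order_tendstoD(2)[OF tl] by blast
      then show ?thesis unfolding f_def by (rule eventually_mono) simp
    next
      case False
      then show ?thesis unfolding f_def by simp
    qed
  qed
  then obtain r where r: "r > 0" and rr: "\<forall>x. x \<noteq> p \<and> dist x p < r \<longrightarrow> (\<forall>lj\<in>NS.
      (0 < pre N (fst lj) (snd lj) p \<longrightarrow> 0 < pre N (fst lj) (snd lj) x) \<and>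
      (pre N (fst lj) (snd lj) p < 0 \<longrightarrow> pre N (fst lj) (snd lj) x < 0))"
    unfolding eventually_at by auto
  have rball: "\<forall>x\<in>ball p r. \<forall>l\<in>{1..depth N}. \<forall>j<width N l.
        (0 < pre N l j p \<longrightarrow> 0 < pre N l j x) \<and> (pre N l j p < 0 \<longrightarrow> pre N l j x < 0)"
  proof (intro ballI allI impI)
    fix x l j assume x: "x \<in> ball p r" and l: "l \<in> {1..depth N}" and j: "j < width N l"
    have lj: "(l,j) \<in> NS" unfolding NS_def using l j by auto
    show "(0 < pre N l j p \<longrightarrow> 0 < pre N l j x) \<and> (pre N l j p < 0 \<longrightarrow> pre N l j x < 0)"
    proof (cases "x = p")
      case True then show ?thesis by simp
    next
      case False
      have "dist x p < r" using x by (simp add: dist_commute)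
      then have "\<forall>lj\<in>NS. (0 < pre N (fst lj) (snd lj) p \<longrightarrow> 0 < pre N (fst lj) (snd lj) x) \<and>
        (pre N (fst lj) (snd lj) p < 0 \<longrightarrow> pre N (fst lj) (snd lj) x < 0)" using rr False by blast
      from bspec[OF this lj] show ?thesis by simp
    qed
  qed
  define S where "S = {(l,j). l\<in>{1..depth N} \<and> j<width N l \<and> \<tau> \<subseteq> bent N l j}"
  have "card S = nat (int CARD('n) - aff_dim \<tau>)"
    using assms(2) tauC unfolding supertransversal_def S_def by blast
  then have "card S = 2" using assms(5) by simp
  then obtain x y where xy: "S = {x, y}" "x \<noteq> y" unfolding card_2_iff by blast
  obtain a j1 b j2 where ab: "S = {(a,j1),(b,j2)}" "(a,j1) \<noteq> (b,j2)" "a \<le> b"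
  proof (cases "fst x \<le> fst y")
    case True
    then show ?thesis using that[of "fst x" "snd x" "fst y" "snd y"] xy by auto
  next
    case False
    then show ?thesis using that[of "fst y" "snd y" "fst x" "snd x"] xy by auto
  qed
  interpret loc N \<tau> t p r a j1 b j2
    by unfold_locales (use assms(2,3,5) tau tne tbp p r rball ab in \<open>auto simp: S_def\<close>)
  obtain g1 where g1: "\<forall>x\<in>ball p r. pre N a j1 x = g1 \<bullet> (x - p)" using z1_lin by blast
  obtain gp where gp: "\<forall>x\<in>ball p r. 0 \<le> 1 * pre N a j1 x \<longrightarrow> pre N b j2 x = gp \<bullet> (x - p)"
    using z2_lin[of 1] by auto
  obtain gm where gm: "\<forall>x\<in>ball p r. 0 \<le> -1 * pre N a j1 x \<longrightarrow> pre N b j2 x = gm \<bullet> (x - p)"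
    using z2_lin[of "-1"] by auto
  interpret loc2 N \<tau> t p r a j1 b j2 g1 gp gm
    by unfold_locales (use g1 gp gm in auto)
  show ?thesis by (rule count)
qed


end
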